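(* Consider the $L$-layer LSTM described in the context and let $k\in\mathbb{Z}_{\ge0}$. Assume $\rho(A^{(l)}_s(k))<1$ for all $l\in[L]$. Let $x(t),\widehat{x}(t)\in[-x_{\max},x_{\max}]^{n_x}$, $t\ge0$, be infinite input sequences, let $e>0$, and assume there exists $t_0$ with $x(t)=\widehat{x}(t)$ for all $t\ge t_0$. Then $\sup_{s(0)\in\prod_{l=1}^L\mathcal{S}^{(l)}(k)}T_R(x,\widehat{x},s(0);e)\le\min\{t\ge0:\tilde\beta(2\sqrt{n_c}\,\bar s(k),t';k)\le e/\|U_y\|\text{ for all }t'\ge t\}$, where $\bar s(k)=(\bar s^{(1)}(k),\dots,\bar s^{(L)}(k))$, $\bar s^{(l)}(k)=\|(\overline{c}^{(l)}(k),\phi(\overline{c}^{(l)}(k))\overline{\sigma}^{(l)}_o(k))\|$, and $2\sqrt{n_c}\,\bar s(k)$ is the $L$-tuple $(2\sqrt{n_c}\bar s^{(1)}(k),\dots,2\sqrt{n_c}\bar s^{(L)}(k))$.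
   Context: LSTM: fix $L\in\mathbb{N}$, dimensions $n_x,n_c,n_y$, $x_{\max}>0$. For $l\in[L]$ let $n^{(l)}=n_x$ if $l=1$, $n^{(l)}=n_c$ if $l\ge2$; weights $W^{(l)}_*\in\mathbb{R}^{n_c\times n^{(l)}}$, $U^{(l)}_*\in\mathbb{R}^{n_c\times n_c}$, biases $b^{(l)}_*\in\mathbb{R}^{n_c}$, $*\in\{f,i,c,o\}$, and $U_y\in\mathbb{R}^{n_y\times n_c}$, $b_y\in\mathbb{R}^{n_y}$. With $\sigma(w)=1/(1+e^{-w})$, $\phi=\tanh$, $\odot$ componentwise product: $c^{(l)}(t+1)=\sigma(W^{(l)}_f x^{(l)}(t)+U^{(l)}_f h^{(l)}(t)+b^{(l)}_f)\odot c^{(l)}(t)+\sigma(W^{(l)}_i x^{(l)}(t)+U^{(l)}_i h^{(l)}(t)+b^{(l)}_i)\odot\phi(W^{(l)}_c x^{(l)}(t)+U^{(l)}_c h^{(l)}(t)+b^{(l)}_c)$, $h^{(l)}(t+1)=\sigma(W^{(l)}_o x^{(l)}(t)+U^{(l)}_o h^{(l)}(t)+b^{(l)}_o)\odot\phi(c^{(l)}(t+1))$, $y(t)=U_y h^{(L)}(t)+b_y$, with $x^{(1)}(t)=x(t)$, $x^{(l)}(t)=h^{(l-1)}(t+1)$ for $l\ge2$; $s^{(l)}=(c^{(l)},h^{(l)})$, $s=(s^{(1)},\dots,s^{(L)})$. $y(t,s(0),x(0:t))$ denotes the output at time $t$ from initial state $s(0)$ under input $x$. Recovery time: for inputs as in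 the claim, $T_R(x,\widehat{x},s(0);e)=\min\{t\ge t_0:\|y(t',s(0),x(0:t'))-y(t',s(0),\widehat{x}(0:t'))\|\le e\text{ for all }t'\ge t\}-t_0$, and $T_R=\infty$ if this set is empty. Quantities: $x^{(l)}_{\max}=x_{\max}$ if $l=1$, $=1$ if $l\ge2$; $|A|$ entrywise absolute value; $\mathbf{1}_n$ all-ones vector; $v_+$ componentwise positive part; $\|\cdot\|_\infty$ max norm. For $\eta\ge0$, $*\in\{f,i,o\}$: $G^{(l)}_*(\eta)=\|(x^{(l)}_{\max}|W^{(l)}_*|\mathbf{1}_{n^{(l)}}+\eta|U^{(l)}_*|\mathbf{1}_{n_c}+b^{(l)}_* )_+\|_\infty$, $G^{(l)}_c(\eta)=\|x^{(l)}_{\max}|W^{(l)}_c|\mathbf{1}_{n^{(l)}}+\eta|U^{(l)}_c|\mathbf{1}_{n_c}+|b^{(l)}_c|\|_\infty$. With $\eta^{(l)}(-1)=1$, $k\ge0$: $\overline{\sigma}^{(l)}_*(k)=\sigma(G^{(l)}_*(\eta^{(l)}(k-1)))$, $\overline{\phi}^{(l)}_c(k)=\phi(G^{(l)}_c(\eta^{(l)}(k-1)))$, $\overline{c}^{(l)}(k)=\overline{\sigma}^{(l)}_i(k)\overline{\phi}^{(l)}_c(k)/(1-\overline{\sigma}^{(l)}_f(k))$, $\eta^{(l)}(k)=\phi(\overline{c}^{(l)}(k))\overline{\sigma}^{(l)}_o(k)$. $\mathcal{S}^{(l)}(k)=\{(c,h):\|c\|_\infty\le\overline{c}^{(l)}(k),\|h\|_\infty\le\phi(\overline{c}^{(l)}(k))\overline{\sigma}^{(l)}_o(k)\}$.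 With $\|\cdot\|$ Euclidean norm / induced 2-norm: $\alpha^{(l)}_s(k)=\tfrac14\|U^{(l)}_f\|\overline{c}^{(l)}(k)+\overline{\sigma}^{(l)}_i(k)\|U^{(l)}_c\|+\tfrac14\|U^{(l)}_i\|\overline{\phi}^{(l)}_c(k)$, $A^{(l)}_s(k)=\begin{bmatrix}\overline{\sigma}^{(l)}_f(k)&\alpha^{(l)}_s(k)\\ \overline{\sigma}^{(l)}_o(k)\overline{\sigma}^{(l)}_f(k)&\alpha^{(l)}_s(k)\overline{\sigma}^{(l)}_o(k)+\tfrac14\phi(\overline{c}^{(l)}(k))\|U^{(l)}_o\|\end{bmatrix}$, $\rho$ spectral radius; $\alpha^{(l)}_x(k)=\tfrac14\|W^{(l)}_f\|\overline{c}^{(l)}(k)+\overline{\sigma}^{(l)}_i(k)\|W^{(l)}_c\|+\tfrac14\|W^{(l)}_i\|\overline{\phi}^{(l)}_c(k)$, $a^{(l)}_x(k)=(\alpha^{(l)}_x(k),\ \alpha^{(l)}_x(k)\overline{\sigma}^{(l)}_o(k)+\tfrac14\phi(\overline{c}^{(l)}(k))\|W^{(l)}_o\|)^\top$. For nonnegative scalars $s^{(1)},\dots,s^{(L)}$: $\tilde\beta(s^{(1:L)},t;k)=\mu^{(L)}(t)\rho(A^{(L)}_s(k))^t s^{(L)}+\sum_{l=1}^{L-1}\mu^{(l:L)}(t)\frac{(t+L-l)!}{t!(L-l)!}\max_{i=l,\dots,L}\rho(A^{(i)}_s(k))^t\big(\prod_{i=l+1}^L\|a^{(i)}_x(k)\|\big)s^{(l)}$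 (sum $=0$ if $L=1$), where $\mu^{(l:L)}(t)=\prod_{i=l}^L\mu^{(i)}(t)$, $\mu^{(l)}(t)=\sqrt{(1+(r^{(l)})^{2t})+\frac{|\nu^{(l)}|^2}{|\lambda^{(l)}_1|^2}\big(\frac{1-(r^{(l)})^t}{1-r^{(l)}}\big)^2}$, using any decomposition $A^{(l)}_s(k)=U\begin{bmatrix}\lambda^{(l)}_1&\nu^{(l)}\\0&\lambda^{(l)}_2\end{bmatrix}U^*$ with $U$ unitary, $\lambda^{(l)}_1\ge\lambda^{(l)}_2$, and $r^{(l)}=|\lambda^{(l)}_2|/|\lambda^{(l)}_1|\in[0,1]$. *)

theory Defs
  imports "HOL-Analysis.Analysis" "HOL-Library.Extended_Nat"
begin

section \<open>Elementwise operations\<close>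

definition sigm :: "real \<Rightarrow> real" where
  "sigm w = 1 / (1 + exp (- w))"

definition vmap :: "(real \<Rightarrow> real) \<Rightarrow> real^'n \<Rightarrow> real^'n" where
  "vmap f v = (\<chi> j. f (v $ j))"

definition had :: "real^'n \<Rightarrow> real^'n \<Rightarrow> real^'n" where
  "had a b = (\<chi> j. a $ j * b $ j)"

text \<open>|A| 1 : row sums of the entrywise absolute value\<close>
definition absrowsum :: "real^'n::finite^'m \<Rightarrow> real^'m" where
  "absrowsum M = (\<chi> i. \<Sum>j\<in>UNIV. \<bar>M $ i $ j\<bar>)"

text \<open>induced 2-norm (operator norm w.r.t. Euclidean norms)\<close>
definition opnorm :: "real^'n::finite^'m::finite \<Rightarrow> real" where
  "opnorm M = onorm (\<lambda>v. M *v v)"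

section \<open>LSTM\<close>

record ('i, 'c) lstm_layer =
  Wf :: "real^'i^'c"  Wi :: "real^'i^'c"  Wc :: "real^'i^'c"  Wo :: "real^'i^'c"
  Uf :: "real^'c^'c"  Ui :: "real^'c^'c"  Uc :: "real^'c^'c"  Uo :: "real^'c^'c"
  bf :: "real^'c"  bi :: "real^'c"  bc :: "real^'c"  bo :: "real^'c"

text \<open>one layer update: input x^{(l)}(t), state (c(t),h(t)) \<mapsto> (c(t+1),h(t+1))\<close>
definition cell :: "('i::finite, 'c::finite) lstm_layer \<Rightarrow> real^'i \<Rightarrow> (real^'c) \<times> (real^'c)
    \<Rightarrow> (real^'c) \<times> (real^'c)" where
  "cell P x s = (let c = fst s; h = snd s;
      fg = vmap sigm (Wf P *v x + Uf P *v h + bf P);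
      ig = vmap sigm (Wi P *v x + Ui P *v h + bi P);
      cg = vmap tanh (Wc P *v x + Uc P *v h + bc P);
      og = vmap sigm (Wo P *v x + Uo P *v h + bo P);
      c' = had fg c + had ig cg
    in (c', had og (vmap tanh c')))"

text \<open>State s = (s^{(1)},...,s^{(L)}) is a function of the layer index l (only l in [1..L] matters).
  P1: parameters of layer 1, Ps l: parameters of layer l >= 2.\<close>
fun layer_state :: "('x::finite, 'c::finite) lstm_layer \<Rightarrow> (nat \<Rightarrow> ('c, 'c) lstm_layer) \<Rightarrow> real^'x
    \<Rightarrow> (nat \<Rightarrow> (real^'c) \<times> (real^'c)) \<Rightarrow> nat \<Rightarrow> (real^'c) \<times> (real^'c)" where
  "layer_state P1 Ps x s 0 = s 0"
| "layer_state P1 Ps x s (Suc 0) = cell P1 x (s 1)"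
| "layer_state P1 Ps x s (Suc (Suc l)) =
     cell (Ps (Suc (Suc l))) (snd (layer_state P1 Ps x s (Suc l))) (s (Suc (Suc l)))"

fun traj :: "('x::finite, 'c::finite) lstm_layer \<Rightarrow> (nat \<Rightarrow> ('c, 'c) lstm_layer) \<Rightarrow> (nat \<Rightarrow> real^'x)
    \<Rightarrow> (nat \<Rightarrow> (real^'c) \<times> (real^'c)) \<Rightarrow> nat \<Rightarrow> (nat \<Rightarrow> (real^'c) \<times> (real^'c))" where
  "traj P1 Ps x s0 0 = s0"
| "traj P1 Ps x s0 (Suc t) = layer_state P1 Ps (x t) (traj P1 Ps x s0 t)"

text \<open>y(t, s(0), x(0:t))\<close>
definition lstm_out :: "('x::finite, 'c::finite) lstm_layer \<Rightarrow> (nat \<Rightarrow> ('c, 'c) lstm_layer)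
    \<Rightarrow> real^'c^'y::finite \<Rightarrow> real^'y \<Rightarrow> nat \<Rightarrow> (nat \<Rightarrow> real^'x)
    \<Rightarrow> (nat \<Rightarrow> (real^'c) \<times> (real^'c)) \<Rightarrow> nat \<Rightarrow> real^'y" where
  "lstm_out P1 Ps Uy b_y L x s0 t = Uy *v snd (traj P1 Ps x s0 t L) + b_y"

text \<open>least element of a set of naturals, infinity if empty\<close>
definition least_enat :: "nat set \<Rightarrow> enat" where
  "least_enat R = (if R = {} then \<infinity> else enat (LEAST t. t \<in> R))"

definition recovery_time :: "('x::finite, 'c::finite) lstm_layer \<Rightarrow> (nat \<Rightarrow> ('c, 'c) lstm_layer)
    \<Rightarrow> real^'c^'y::finite \<Rightarrow> real^'y \<Rightarrow> nat \<Rightarrow> (nat \<Rightarrow> real^'x) \<Rightarrow> (nat \<Rightarrow> real^'x)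
    \<Rightarrow> (nat \<Rightarrow> (real^'c) \<times> (real^'c)) \<Rightarrow> nat \<Rightarrow> real \<Rightarrow> enat" where
  "recovery_time P1 Ps Uy b_y L x xh s0 t0 e =
     (let R = {t. t \<ge> t0 \<and> (\<forall>t'\<ge>t. norm (lstm_out P1 Ps Uy b_y L x s0 t' - lstm_out P1 Ps Uy b_y L xh s0 t') \<le> e)}
      in if R = {} then \<infinity> else enat ((LEAST t. t \<in> R) - t0))"

section \<open>Bounds\<close>

definition Gplus :: "real^'i::finite^'c::finite \<Rightarrow> real^'c^'c \<Rightarrow> real^'c \<Rightarrow> real \<Rightarrow> real \<Rightarrow> real" where
  "Gplus W U b xm \<eta> = infnorm (\<chi> i. max 0 (xm * absrowsum W $ i + \<eta> * absrowsum U $ i + b $ i))"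

definition Gabs :: "real^'i::finite^'c::finite \<Rightarrow> real^'c^'c \<Rightarrow> real^'c \<Rightarrow> real \<Rightarrow> real \<Rightarrow> real" where
  "Gabs W U b xm \<eta> = infnorm (\<chi> i. xm * absrowsum W $ i + \<eta> * absrowsum U $ i + \<bar>b $ i\<bar>)"

definition cbar_of :: "('i::finite, 'c::finite) lstm_layer \<Rightarrow> real \<Rightarrow> real \<Rightarrow> real" where
  "cbar_of P xm \<eta> = sigm (Gplus (Wi P) (Ui P) (bi P) xm \<eta>) * tanh (Gabs (Wc P) (Uc P) (bc P) xm \<eta>)
                     / (1 - sigm (Gplus (Wf P) (Uf P) (bf P) xm \<eta>))"

definition eta_next :: "('i::finite, 'c::finite) lstm_layer \<Rightarrow> real \<Rightarrow> real \<Rightarrow> real" where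
  "eta_next P xm \<eta> = tanh (cbar_of P xm \<eta>) * sigm (Gplus (Wo P) (Uo P) (bo P) xm \<eta>)"

text \<open>eta_prev P xm k = \<eta>(k-1), with \<eta>(-1) = 1\<close>
definition eta_prev :: "('i::finite, 'c::finite) lstm_layer \<Rightarrow> real \<Rightarrow> nat \<Rightarrow> real" where
  "eta_prev P xm k = (eta_next P xm ^^ k) 1"

definition sig_f :: "('i::finite, 'c::finite) lstm_layer \<Rightarrow> real \<Rightarrow> nat \<Rightarrow> real" where
  "sig_f P xm k = sigm (Gplus (Wf P) (Uf P) (bf P) xm (eta_prev P xm k))"
definition sig_i :: "('i::finite, 'c::finite) lstm_layer \<Rightarrow> real \<Rightarrow> nat \<Rightarrow> real" where
  "sig_i P xm k = sigm (Gplus (Wi P) (Ui P) (bi P) xm (eta_prev P xm k))"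
definition sig_o :: "('i::finite, 'c::finite) lstm_layer \<Rightarrow> real \<Rightarrow> nat \<Rightarrow> real" where
  "sig_o P xm k = sigm (Gplus (Wo P) (Uo P) (bo P) xm (eta_prev P xm k))"
definition phi_c :: "('i::finite, 'c::finite) lstm_layer \<Rightarrow> real \<Rightarrow> nat \<Rightarrow> real" where
  "phi_c P xm k = tanh (Gabs (Wc P) (Uc P) (bc P) xm (eta_prev P xm k))"
definition cbar :: "('i::finite, 'c::finite) lstm_layer \<Rightarrow> real \<Rightarrow> nat \<Rightarrow> real" where
  "cbar P xm k = sig_i P xm k * phi_c P xm k / (1 - sig_f P xm k)"

definition alpha_s :: "('i::finite, 'c::finite) lstm_layer \<Rightarrow> real \<Rightarrow> nat \<Rightarrow> real" where
  "alpha_s P xm k = 1/4 * opnorm (Uf P) * cbar P xm k + sig_i P xm k * opnorm (Uc P)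
                    + 1/4 * opnorm (Ui P) * phi_c P xm k"

definition A_s :: "('i::finite, 'c::finite) lstm_layer \<Rightarrow> real \<Rightarrow> nat \<Rightarrow> real^2^2" where
  "A_s P xm k = (\<chi> i j.
     if i = 1 then (if j = 1 then sig_f P xm k else alpha_s P xm k)
     else (if j = 1 then sig_o P xm k * sig_f P xm k
           else alpha_s P xm k * sig_o P xm k + 1/4 * tanh (cbar P xm k) * opnorm (Uo P)))"

definition alpha_x :: "('i::finite, 'c::finite) lstm_layer \<Rightarrow> real \<Rightarrow> nat \<Rightarrow> real" where
  "alpha_x P xm k = 1/4 * opnorm (Wf P) * cbar P xm k + sig_i P xm k * opnorm (Wc P)
                    + 1/4 * opnorm (Wi P) * phi_c P xm k"

definition a_x :: "('i::finite, 'c::finite) lstm_layer \<Rightarrow> real \<Rightarrow> nat \<Rightarrow> real^2" where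
  "a_x P xm k = vector [alpha_x P xm k,
                        alpha_x P xm k * sig_o P xm k + 1/4 * tanh (cbar P xm k) * opnorm (Wo P)]"

definition sbar :: "('i::finite, 'c::finite) lstm_layer \<Rightarrow> real \<Rightarrow> nat \<Rightarrow> real" where
  "sbar P xm k = norm (vector [cbar P xm k, tanh (cbar P xm k) * sig_o P xm k] :: real^2)"

text \<open>Layer dispatch: layer 1 uses P1 and x_max, layers l >= 2 use Ps l and 1.\<close>
definition cbarL where "cbarL P1 Ps xmax k l = (if l = 1 then cbar P1 xmax k else cbar (Ps l) 1 k)"
definition sig_oL where "sig_oL P1 Ps xmax k l = (if l = 1 then sig_o P1 xmax k else sig_o (Ps l) 1 k)"
definition A_sL where "A_sL P1 Ps xmax k l = (if l = 1 then A_s P1 xmax k else A_s (Ps l) 1 k)"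
definition a_xL where "a_xL P1 Ps xmax k l = (if l = 1 then a_x P1 xmax k else a_x (Ps l) 1 k)"
definition sbarL where "sbarL P1 Ps xmax k l = (if l = 1 then sbar P1 xmax k else sbar (Ps l) 1 k)"

text \<open>The set \<Prod>_l S^{(l)}(k) of initial states\<close>
definition init_set :: "('x::finite, 'c::finite) lstm_layer \<Rightarrow> (nat \<Rightarrow> ('c, 'c) lstm_layer) \<Rightarrow> real
    \<Rightarrow> nat \<Rightarrow> nat \<Rightarrow> (nat \<Rightarrow> (real^'c) \<times> (real^'c)) set" where
  "init_set P1 Ps xmax k L = {s0. \<forall>l\<in>{1..L}.
      infnorm (fst (s0 l)) \<le> cbarL P1 Ps xmax k l \<and>
      infnorm (snd (s0 l)) \<le> tanh (cbarL P1 Ps xmax k l) * sig_oL P1 Ps xmax k l}"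

section \<open>Spectral radius, Schur decomposition, beta\<close>

definition cmat :: "real^'n^'m \<Rightarrow> complex^'n^'m" where
  "cmat A = (\<chi> i j. complex_of_real (A $ i $ j))"

definition cadj :: "complex^'n^'m \<Rightarrow> complex^'m^'n" where
  "cadj A = (\<chi> i j. cnj (A $ j $ i))"

definition spec_rad :: "complex^'n::finite^'n \<Rightarrow> real" where
  "spec_rad A = Sup {cmod z | z. \<exists>v. v \<noteq> 0 \<and> A *v v = z *s v}"

text \<open>A = U [[lam1, nu],[0, lam2]] U^* with U unitary and lam1 >= lam2\<close>
definition schur2 :: "real^2^2 \<Rightarrow> complex^2^2 \<Rightarrow> real \<Rightarrow> complex \<Rightarrow> real \<Rightarrow> bool" where
  "schur2 A U lam1 nu lam2 \<longleftrightarrow>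
     U ** cadj U = mat 1 \<and> cadj U ** U = mat 1 \<and>
     cmat A = U ** (\<chi> i j. if i = 1 \<and> j = 1 then complex_of_real lam1
                           else if i = 1 \<and> j = 2 then nu
                           else if i = 2 \<and> j = 2 then complex_of_real lam2 else 0) ** cadj U \<and>
     lam1 \<ge> lam2"

definition mu_fn :: "real \<Rightarrow> complex \<Rightarrow> real \<Rightarrow> nat \<Rightarrow> real" where
  "mu_fn lam1 nu lam2 t = (let r = \<bar>lam2\<bar> / \<bar>lam1\<bar> in
     sqrt ((1 + r ^ (2 * t)) + (cmod nu)\<^sup>2 / \<bar>lam1\<bar>\<^sup>2
            * (if r = 1 then real t else (1 - r ^ t) / (1 - r))\<^sup>2))"

text \<open>beta-tilde; rho l, mu l t, axn l = ||a_x^{(l)}(k)||, s l = s^{(l)}\<close>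
definition beta_tilde :: "nat \<Rightarrow> (nat \<Rightarrow> real) \<Rightarrow> (nat \<Rightarrow> nat \<Rightarrow> real) \<Rightarrow> (nat \<Rightarrow> real)
    \<Rightarrow> (nat \<Rightarrow> real) \<Rightarrow> nat \<Rightarrow> real" where
  "beta_tilde L rho mu axn s t =
     mu L t * rho L ^ t * s L +
     (\<Sum>l\<in>{1..<L}. (\<Prod>i\<in>{l..L}. mu i t) * (fact (t + L - l) / (fact t * fact (L - l)))
         * (MAX i\<in>{l..L}. rho i ^ t) * (\<Prod>i\<in>{l+1..L}. axn i) * s l)"

end

theory Submission
  imports Defs
begin

(* ---- part A ---- *)


lemma sigm_pos: "0 < sigm w" by (simp add: sigm_def add_pos_pos)
lemma sigm_lt1: "sigm w < 1"
  unfolding sigm_def by (simp add: divide_less_eq add_pos_pos)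
lemma sigm_mono: "a \<le> b \<Longrightarrow> sigm a \<le> sigm b"
  unfolding sigm_def by (simp add: frac_le add_pos_pos)

lemma sigm_deriv: "(sigm has_real_derivative (sigm x * (1 - sigm x))) (at x)"
proof -
  have "((\<lambda>w. 1 / (1 + exp (- w))) has_real_derivative (exp (-x) / (1 + exp (-x))^2)) (at x)"
  proof -
    have ne: "1 + exp (- x) \<noteq> 0" using add_pos_pos[OF zero_less_one exp_gt_zero[of "-x"]] by simp
    show ?thesis
      by (rule derivative_eq_intros refl | simp add: ne)+ (simp add: power2_eq_square field_simps ne)
  qed
  moreover have "exp (-x) / (1 + exp (-x))^2 = sigm x * (1 - sigm x)"
  proof -
    have ne: "1 + exp (- x) \<noteq> 0" using add_pos_pos[OF zero_less_one exp_gt_zero[of "-x"]] by simp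
    show ?thesis unfolding sigm_def by (simp add: field_simps power2_eq_square ne)
  qed
  ultimately show ?thesis unfolding sigm_def[abs_def] by simp
qed

lemma lip_from_deriv:
  fixes f f' :: "real \<Rightarrow> real"
  assumes d: "\<And>x. (f has_real_derivative f' x) (at x)" and b: "\<And>x. \<bar>f' x\<bar> \<le> K"
  shows "\<bar>f a - f b\<bar> \<le> K * \<bar>a - b\<bar>"
proof -
  have *: "\<bar>f v - f u\<bar> \<le> K * \<bar>v - u\<bar>" if uv: "u < v" for u v
  proof -
    obtain z where "f v - f u = (v - u) * f' z"
      using MVT2[OF uv, of f f'] d by metis
    then have "\<bar>f v - f u\<bar> = \<bar>v - u\<bar> * \<bar>f' z\<bar>" by (simp add: abs_mult)
    also have "\<dots> \<le> \<bar>v - u\<bar> * K" by (rule mult_left_mono[OF b]) simp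
    finally show ?thesis by (simp add: mult.commute)
  qed
  show ?thesis
    using *[of a b] *[of b a] by (cases a b rule: linorder_cases) (auto simp: abs_minus_commute)
qed

lemma sigm_lip: "\<bar>sigm a - sigm b\<bar> \<le> 1/4 * \<bar>a - b\<bar>"
proof (rule lip_from_deriv[OF sigm_deriv])
  fix x
  have "sigm x * (1 - sigm x) \<le> 1/4"
  proof -
    have "(sigm x - 1/2)^2 = 1/4 - sigm x*(1 - sigm x)" by (simp add: power2_eq_square algebra_simps)
    moreover have "(sigm x - 1/2)^2 \<ge> 0" by simp
    ultimately show ?thesis by linarith
  qed
  moreover have "0 \<le> sigm x * (1 - sigm x)" using sigm_pos[of x] sigm_lt1[of x] by simp
  ultimately show "\<bar>sigm x * (1 - sigm x)\<bar> \<le> 1/4" by simp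
qed

lemma tanh_deriv: "(tanh has_real_derivative (1 - tanh x ^ 2)) (at x)" for x :: real
proof -
  have "cosh x \<noteq> 0" using cosh_real_pos[of x] by simp
  from has_field_derivative_tanh[of "\<lambda>x. x", OF this DERIV_ident] show ?thesis by simp
qed

lemma tanh_lip: "\<bar>tanh a - tanh b\<bar> \<le> 1 * \<bar>a - b\<bar>" for a b :: real
proof (rule lip_from_deriv[OF tanh_deriv])
  fix x :: real
  have "tanh x ^ 2 \<le> 1" using tanh_real_bounds[of x] by (auto simp: abs_square_le_1 abs_le_iff)
  then show "\<bar>1 - tanh x ^ 2\<bar> \<le> 1" by simp
qed

lemma tanh_abs_le: "\<bar>tanh x\<bar> \<le> tanh B" if "\<bar>x\<bar> \<le> B" for x B :: real
  using that by (metis tanh_real_abs tanh_real_le_iff)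

lemma tanh_abs_lt1: "\<bar>tanh (x::real)\<bar> < 1" using tanh_real_bounds[of x] by auto


(* ---- part B1 ---- *)


lemma infnorm_le_cart: "(\<And>i. \<bar>(v::real^'n) $ i\<bar> \<le> B) \<Longrightarrow> infnorm v \<le> B"
  unfolding infnorm_cart by (rule cSup_least) auto

lemma infnorm_le_iff_cart: "infnorm (v::real^'n) \<le> B \<longleftrightarrow> (\<forall>i. \<bar>v $ i\<bar> \<le> B)"
  using infnorm_le_cart[of v B] component_le_infnorm_cart[of v] order_trans by blast

lemma norm_had_le:
  assumes "\<And>i. \<bar>a $ i\<bar> \<le> B"
  shows "norm (had a b) \<le> B * norm (b::real^'n)"
proof -
  have B0: "0 \<le> B" using assms[of undefined] by linarith
  have "norm (had a b) \<le> norm (B *\<^sub>R b)"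
    by (rule norm_le_componentwise_cart)
       (auto simp: had_def abs_mult B0 intro!: mult_right_mono assms)
  then show ?thesis using B0 by simp
qed

lemma norm_vmap_lip:
  assumes "\<And>u v. \<bar>f u - f v\<bar> \<le> K * \<bar>u - v\<bar>" "0 \<le> K"
  shows "norm (vmap f u - vmap f v) \<le> K * norm (u - v :: real^'n)"
proof -
  have "norm (vmap f u - vmap f v) \<le> norm (K *\<^sub>R (u - v))"
    by (rule norm_le_componentwise_cart)
       (auto simp: vmap_def abs_mult \<open>0 \<le> K\<close> intro: assms(1))
  then show ?thesis using assms(2) by simp
qed

lemma norm_mv_le: "norm (M *v v) \<le> opnorm M * norm (v::real^'n::finite)"
  for M :: "real^'n^'m::finite"
  unfolding opnorm_def by (rule onorm) simp

lemma opnorm_nonneg: "0 \<le> opnorm (M :: real^'n::finite^'m::finite)"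
  unfolding opnorm_def by (rule onorm_pos_le) simp

lemma norm_le_sqrt_card:
  assumes "\<And>i. \<bar>(v::real^'n) $ i\<bar> \<le> B"
  shows "norm v \<le> sqrt (real CARD('n)) * B"
proof -
  have "norm v \<le> sqrt (real DIM(real^'n)) * infnorm v" by (rule norm_le_infnorm)
  also have "\<dots> \<le> sqrt (real CARD('n)) * B"
    using infnorm_le_cart[OF assms] by (simp add: mult_left_mono)
  finally show ?thesis .
qed


(* ---- part B2 ---- *)

lemma norm_vec2: "norm (vector [a, b] :: real^2) = sqrt (a\<^sup>2 + b\<^sup>2)"
  unfolding norm_vec_def L2_set_def by (simp add: sum_2)

lemma norm_vec2' : "norm (v :: real^2) = sqrt ((v$1)\<^sup>2 + (v$2)\<^sup>2)"
  unfolding norm_vec_def L2_set_def by (simp add: sum_2)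

lemma mv_component_bound:
  fixes W :: "real^'i::finite^'c::finite"
  assumes "\<And>j. \<bar>x $ j\<bar> \<le> xm"
  shows "\<bar>(W *v x) $ i\<bar> \<le> xm * absrowsum W $ i"
proof -
  have "\<bar>(W *v x) $ i\<bar> = \<bar>\<Sum>j\<in>UNIV. W $ i $ j * x $ j\<bar>" by (simp add: matrix_vector_mult_def)
  also have "\<dots> \<le> (\<Sum>j\<in>UNIV. \<bar>W $ i $ j\<bar> * xm)"
    by (rule order_trans[OF sum_abs]) (auto intro!: sum_mono simp: abs_mult intro: mult_left_mono assms)
  also have "\<dots> = xm * absrowsum W $ i" by (simp add: absrowsum_def sum_distrib_left mult.commute)
  finally show ?thesis .
qed

lemma absrowsum_nonneg: "0 \<le> absrowsum W $ i"
  by (simp add: absrowsum_def sum_nonneg)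


(* ---- part B3 ---- *)


lemma gate_upper:
  fixes W :: "real^'i::finite^'c::finite" and U :: "real^'c^'c"
  assumes "\<And>j. \<bar>x $ j\<bar> \<le> xm" "\<And>j. \<bar>h $ j\<bar> \<le> eta"
  shows "(W *v x + U *v h + b) $ i \<le> Gplus W U b xm eta"
proof -
  have e: "(W *v x + U *v h + b) $ i = (W *v x) $ i + (U *v h) $ i + b $ i" by simp
  have "(W *v x + U *v h + b) $ i \<le> xm * absrowsum W $ i + eta * absrowsum U $ i + b $ i"
    unfolding e using mv_component_bound[of x xm W i, OF assms(1)] mv_component_bound[of h eta U i, OF assms(2)]
    by linarith
  also have "\<dots> \<le> max 0 (xm * absrowsum W $ i + eta * absrowsum U $ i + b $ i)" by (rule max.cobounded2)
  also have "\<dots> \<le> Gplus W U b xm eta"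
    unfolding Gplus_def using component_le_infnorm_cart[of "\<chi> i. max 0 (xm * absrowsum W $ i + eta * absrowsum U $ i + b $ i)" i]
    by simp
  finally show ?thesis .
qed

lemma gate_abs:
  fixes W :: "real^'i::finite^'c::finite" and U :: "real^'c^'c"
  assumes "\<And>j. \<bar>x $ j\<bar> \<le> xm" "\<And>j. \<bar>h $ j\<bar> \<le> eta"
  shows "\<bar>(W *v x + U *v h + b) $ i\<bar> \<le> Gabs W U b xm eta"
proof -
  have e: "(W *v x + U *v h + b) $ i = (W *v x) $ i + (U *v h) $ i + b $ i" by simp
  have "\<bar>(W *v x + U *v h + b) $ i\<bar> \<le> xm * absrowsum W $ i + eta * absrowsum U $ i + \<bar>b $ i\<bar>"
    unfolding e using mv_component_bound[of x xm W i, OF assms(1)] mv_component_bound[of h eta U i, OF assms(2)]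
    by linarith
  also have "\<dots> \<le> Gabs W U b xm eta"
    unfolding Gabs_def using component_le_infnorm_cart[of "\<chi> i. xm * absrowsum W $ i + eta * absrowsum U $ i + \<bar>b $ i\<bar>" i]
    by simp
  finally show ?thesis .
qed

lemma Gplus_nonneg: "0 \<le> Gplus W U b xm eta" unfolding Gplus_def by (rule infnorm_pos_le)
lemma Gabs_nonneg: "0 \<le> Gabs W U b xm eta" unfolding Gabs_def by (rule infnorm_pos_le)

lemma Gplus_mono:
  assumes "eta \<le> eta'"
  shows "Gplus W U b xm eta \<le> Gplus W U b xm eta'"
  unfolding Gplus_def
proof (rule infnorm_le_cart)
  fix i
  define v' where "v' = (\<chi> i. max 0 (xm * absrowsum W $ i + eta' * absrowsum U $ i + b $ i))"
  have m: "eta * absrowsum U $ i \<le> eta' * absrowsum U $ i"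
    using mult_right_mono[OF assms absrowsum_nonneg[of U i]] .
  have "\<bar>(\<chi> i. max 0 (xm * absrowsum W $ i + eta * absrowsum U $ i + b $ i)) $ i\<bar>
        = max 0 (xm * absrowsum W $ i + eta * absrowsum U $ i + b $ i)" by simp
  also have "\<dots> \<le> v' $ i" unfolding v'_def vec_lambda_beta using m by linarith
  also have "\<dots> \<le> infnorm v'"
    using component_le_infnorm_cart[of v' i] by linarith
  finally show "\<bar>(\<chi> i. max 0 (xm * absrowsum W $ i + eta * absrowsum U $ i + b $ i)) $ i\<bar>
        \<le> infnorm (\<chi> i. max 0 (xm * absrowsum W $ i + eta' * absrowsum U $ i + b $ i))"
    unfolding v'_def .
qed

lemma Gabs_mono:
  assumes "eta \<le> eta'" "0 \<le> eta" "0 \<le> xm"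
  shows "Gabs W U b xm eta \<le> Gabs W U b xm eta'"
  unfolding Gabs_def
proof (rule infnorm_le_cart)
  fix i
  define v' where "v' = (\<chi> i. xm * absrowsum W $ i + eta' * absrowsum U $ i + \<bar>b $ i\<bar>)"
  have m: "eta * absrowsum U $ i \<le> eta' * absrowsum U $ i"
    using mult_right_mono[OF assms(1) absrowsum_nonneg[of U i]] .
  have p: "0 \<le> xm * absrowsum W $ i" "0 \<le> eta * absrowsum U $ i"
    using assms absrowsum_nonneg[of W i] absrowsum_nonneg[of U i] by auto
  have "\<bar>(\<chi> i. xm * absrowsum W $ i + eta * absrowsum U $ i + \<bar>b $ i\<bar>) $ i\<bar>
        = \<bar>xm * absrowsum W $ i + eta * absrowsum U $ i + \<bar>b $ i\<bar>\<bar>" by simp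
  also have "\<dots> \<le> v' $ i" unfolding v'_def vec_lambda_beta using m p by linarith
  also have "\<dots> \<le> infnorm v'"
    using component_le_infnorm_cart[of v' i] by linarith
  finally show "\<bar>(\<chi> i. xm * absrowsum W $ i + eta * absrowsum U $ i + \<bar>b $ i\<bar>) $ i\<bar>
        \<le> infnorm (\<chi> i. xm * absrowsum W $ i + eta' * absrowsum U $ i + \<bar>b $ i\<bar>)"
    unfolding v'_def .
qed


(* ---- part C ---- *)


lemma cbar_of_nonneg: "0 \<le> cbar_of P xm eta"
  unfolding cbar_of_def
  by (intro divide_nonneg_pos mult_nonneg_nonneg) (simp_all add: less_imp_le[OF sigm_pos] Gabs_nonneg sigm_lt1)

lemma eta_next_nonneg: "0 \<le> eta_next P xm eta"
  unfolding eta_next_def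
  by (intro mult_nonneg_nonneg) (simp_all add: cbar_of_nonneg less_imp_le[OF sigm_pos])

lemma eta_next_le1: "eta_next P xm eta \<le> 1"
proof -
  have "tanh (cbar_of P xm eta) \<le> 1" using tanh_real_bounds by (simp add: less_imp_le)
  moreover have "sigm (Gplus (Wo P) (Uo P) (bo P) xm eta) \<le> 1" using sigm_lt1 by (simp add: less_imp_le)
  ultimately show ?thesis unfolding eta_next_def using cbar_of_nonneg sigm_pos
    by (simp add: mult_le_one less_imp_le)
qed

lemma cbar_of_mono:
  assumes "0 \<le> eta" "eta \<le> eta'" "0 \<le> xm"
  shows "cbar_of P xm eta \<le> cbar_of P xm eta'"
proof -
  let ?i = "sigm (Gplus (Wi P) (Ui P) (bi P) xm eta)" and ?i' = "sigm (Gplus (Wi P) (Ui P) (bi P) xm eta')"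
  let ?c = "tanh (Gabs (Wc P) (Uc P) (bc P) xm eta)" and ?c' = "tanh (Gabs (Wc P) (Uc P) (bc P) xm eta')"
  let ?f = "sigm (Gplus (Wf P) (Uf P) (bf P) xm eta)" and ?f' = "sigm (Gplus (Wf P) (Uf P) (bf P) xm eta')"
  have i: "?i \<le> ?i'" by (rule sigm_mono[OF Gplus_mono[OF assms(2)]])
  have c: "?c \<le> ?c'" using Gabs_mono[OF assms(2,1,3)] by simp
  have f: "?f \<le> ?f'" by (rule sigm_mono[OF Gplus_mono[OF assms(2)]])
  have c0: "0 \<le> ?c" using Gabs_nonneg by simp
  have "?i * ?c \<le> ?i' * ?c'" using i c c0 sigm_pos[of "Gplus (Wi P) (Ui P) (bi P) xm eta"]
    by (intro mult_mono) auto
  moreover have "0 < 1 - ?f'" "1 - ?f' \<le> 1 - ?f" using f sigm_lt1 by auto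
  moreover have "0 \<le> ?i * ?c" using c0 less_imp_le[OF sigm_pos] by (intro mult_nonneg_nonneg) auto
  ultimately show ?thesis unfolding cbar_of_def
    by (meson frac_le order_trans less_imp_le)
qed

lemma eta_next_mono:
  assumes "0 \<le> eta" "eta \<le> eta'" "0 \<le> xm"
  shows "eta_next P xm eta \<le> eta_next P xm eta'"
  unfolding eta_next_def
  using cbar_of_mono[OF assms] sigm_mono[OF Gplus_mono[OF assms(2)]] cbar_of_nonneg sigm_pos
  by (intro mult_mono) (auto simp: less_imp_le)

lemma eta_prev_Suc: "eta_prev P xm (Suc k) = eta_next P xm (eta_prev P xm k)"
  by (simp add: eta_prev_def)

lemma eta_prev_nonneg: "0 \<le> eta_prev P xm k"
  by (cases k) (auto simp: eta_prev_def eta_next_nonneg)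

lemma eta_prev_decr: "0 \<le> xm \<Longrightarrow> eta_prev P xm (Suc k) \<le> eta_prev P xm k"
proof (induction k)
  case 0 then show ?case by (simp add: eta_prev_def eta_next_le1)
next
  case (Suc k)
  have e1: "eta_prev P xm (Suc (Suc k)) = eta_next P xm (eta_prev P xm (Suc k))"
    and e2: "eta_prev P xm (Suc k) = eta_next P xm (eta_prev P xm k)" by (rule eta_prev_Suc)+
  show ?case unfolding e1 by (subst (2) e2) (intro eta_next_mono; simp add: eta_prev_nonneg Suc.IH Suc.prems flip: e2)
qed

lemma eta_prev_Suc_eq: "eta_prev P xm (Suc k) = tanh (cbar P xm k) * sig_o P xm k"
  by (simp add: eta_prev_Suc eta_next_def cbar_def cbar_of_def sig_i_def sig_f_def phi_c_def sig_o_def)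

lemma sig_f_pos: "0 < sig_f P xm k" and sig_f_lt1: "sig_f P xm k < 1"
  and sig_i_pos: "0 < sig_i P xm k" and sig_i_lt1: "sig_i P xm k < 1"
  and sig_o_pos: "0 < sig_o P xm k" and sig_o_lt1: "sig_o P xm k < 1"
  by (auto simp: sig_f_def sig_i_def sig_o_def sigm_pos sigm_lt1)

lemma phi_c_nonneg: "0 \<le> phi_c P xm k" and phi_c_lt1: "phi_c P xm k < 1"
  by (auto simp: phi_c_def Gabs_nonneg tanh_real_lt_1)

lemma cbar_nonneg: "0 \<le> cbar P xm k"
  unfolding cbar_def
  by (intro divide_nonneg_pos mult_nonneg_nonneg) (simp_all add: less_imp_le[OF sig_i_pos] phi_c_nonneg sig_f_lt1)

lemma cbar_fix: "sig_f P xm k * cbar P xm k + sig_i P xm k * phi_c P xm k = cbar P xm k"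
proof -
  have "1 - sig_f P xm k \<noteq> 0" using sig_f_lt1[of P xm k] by simp
  then show ?thesis unfolding cbar_def by (simp add: field_simps)
qed

lemma hbar_le_eta: "0 \<le> xm \<Longrightarrow> tanh (cbar P xm k) * sig_o P xm k \<le> eta_prev P xm k"
  using eta_prev_decr[of xm P k] by (simp add: eta_prev_Suc_eq)

lemma hbar_nonneg: "0 \<le> tanh (cbar P xm k) * sig_o P xm k"
  by (intro mult_nonneg_nonneg) (simp_all add: cbar_nonneg less_imp_le[OF sig_o_pos])

lemma hbar_le1: "tanh (cbar P xm k) * sig_o P xm k \<le> 1"
  using tanh_real_lt_1[of "cbar P xm k"] sig_o_lt1[of P xm k] cbar_nonneg[of P xm k] sig_o_pos[of P xm k]
  by (simp add: mult_le_one less_imp_le)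

lemma cell_fst: "fst (cell P x (c,h)) = had (vmap sigm (Wf P *v x + Uf P *v h + bf P)) c
   + had (vmap sigm (Wi P *v x + Ui P *v h + bi P)) (vmap tanh (Wc P *v x + Uc P *v h + bc P))"
  by (simp add: cell_def Let_def)

lemma cell_snd: "snd (cell P x (c,h)) = had (vmap sigm (Wo P *v x + Uo P *v h + bo P)) (vmap tanh (fst (cell P x (c,h))))"
  by (simp add: cell_def Let_def)

lemma gates:
  fixes P :: "('i::finite, 'c::finite) lstm_layer"
  assumes xm: "0 \<le> xm" and x: "\<And>j. \<bar>x $ j\<bar> \<le> xm" and h: "\<And>j. \<bar>h $ j\<bar> \<le> tanh (cbar P xm k) * sig_o P xm k"
  shows "vmap sigm (Wf P *v x + Uf P *v h + bf P) $ i \<le> sig_f P xm k"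
    and "vmap sigm (Wi P *v x + Ui P *v h + bi P) $ i \<le> sig_i P xm k"
    and "vmap sigm (Wo P *v x + Uo P *v h + bo P) $ i \<le> sig_o P xm k"
    and "\<bar>vmap tanh (Wc P *v x + Uc P *v h + bc P) $ i\<bar> \<le> phi_c P xm k"
proof -
  have h': "\<And>j. \<bar>h $ j\<bar> \<le> eta_prev P xm k" using h hbar_le_eta[OF xm] order_trans by blast
  show "vmap sigm (Wf P *v x + Uf P *v h + bf P) $ i \<le> sig_f P xm k"
    unfolding vmap_def sig_f_def vec_lambda_beta by (rule sigm_mono[OF gate_upper[OF x h']])
  show "vmap sigm (Wi P *v x + Ui P *v h + bi P) $ i \<le> sig_i P xm k"
    unfolding vmap_def sig_i_def vec_lambda_beta by (rule sigm_mono[OF gate_upper[OF x h']])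
  show "vmap sigm (Wo P *v x + Uo P *v h + bo P) $ i \<le> sig_o P xm k"
    unfolding vmap_def sig_o_def vec_lambda_beta by (rule sigm_mono[OF gate_upper[OF x h']])
  show "\<bar>vmap tanh (Wc P *v x + Uc P *v h + bc P) $ i\<bar> \<le> phi_c P xm k"
    unfolding vmap_def phi_c_def vec_lambda_beta by (rule tanh_abs_le[OF gate_abs[OF x h']])
qed

definition inS :: "('i::finite, 'c::finite) lstm_layer \<Rightarrow> real \<Rightarrow> nat \<Rightarrow> (real^'c) \<times> (real^'c) \<Rightarrow> bool" where
  "inS P xm k s \<longleftrightarrow> (\<forall>j. \<bar>fst s $ j\<bar> \<le> cbar P xm k) \<and> (\<forall>j. \<bar>snd s $ j\<bar> \<le> tanh (cbar P xm k) * sig_o P xm k)"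

lemma cell_inv:
  fixes P :: "('i::finite, 'c::finite) lstm_layer"
  assumes xm: "0 \<le> xm" and x: "\<And>j. \<bar>x $ j\<bar> \<le> xm" and s: "inS P xm k s"
  shows "inS P xm k (cell P x s)"
proof -
  obtain c h where sch: "s = (c, h)" by fastforce
  have c: "\<And>j. \<bar>c $ j\<bar> \<le> cbar P xm k" and h: "\<And>j. \<bar>h $ j\<bar> \<le> tanh (cbar P xm k) * sig_o P xm k"
    using s by (auto simp: inS_def sch)
  note g = gates[OF xm x h]
  have c': "\<bar>fst (cell P x (c,h)) $ j\<bar> \<le> cbar P xm k" for j
  proof -
    let ?f = "vmap sigm (Wf P *v x + Uf P *v h + bf P) $ j"
    let ?i = "vmap sigm (Wi P *v x + Ui P *v h + bi P) $ j"
    let ?g = "vmap tanh (Wc P *v x + Uc P *v h + bc P) $ j"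
    have f0: "0 \<le> ?f" and i0: "0 \<le> ?i" by (auto simp: vmap_def sigm_pos less_imp_le)
    have "\<bar>fst (cell P x (c,h)) $ j\<bar> = \<bar>?f * c $ j + ?i * ?g\<bar>" by (simp add: cell_fst had_def)
    also have "\<dots> \<le> ?f * \<bar>c $ j\<bar> + ?i * \<bar>?g\<bar>" using f0 i0 by (simp add: abs_mult abs_triangle_ineq[THEN order_trans])
    also have "\<dots> \<le> sig_f P xm k * cbar P xm k + sig_i P xm k * phi_c P xm k"
      using g[of j] f0 i0 c[of j] cbar_nonneg phi_c_nonneg
      by (intro add_mono mult_mono) auto
    also have "\<dots> = cbar P xm k" by (rule cbar_fix)
    finally show ?thesis .
  qed
  have h': "\<bar>snd (cell P x (c,h)) $ j\<bar> \<le> tanh (cbar P xm k) * sig_o P xm k" for j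
  proof -
    let ?o = "vmap sigm (Wo P *v x + Uo P *v h + bo P) $ j"
    have o0: "0 \<le> ?o" by (auto simp: vmap_def sigm_pos less_imp_le)
    have "\<bar>snd (cell P x (c,h)) $ j\<bar> = ?o * \<bar>tanh (fst (cell P x (c,h)) $ j)\<bar>"
      using o0 by (simp add: cell_snd[of P x c h] had_def vmap_def abs_mult)
    also have "\<dots> \<le> sig_o P xm k * tanh (cbar P xm k)"
      using g(3)[of j] o0 tanh_abs_le[OF c'[of j]] cbar_nonneg
      by (intro mult_mono) auto
    finally show ?thesis by (simp add: mult.commute)
  qed
  show ?thesis using c' h' by (simp add: inS_def sch)
qed


(* ---- part D ---- *)


lemma had_diff: "had a b - had a' b' = had a (b - b') + had b' (a - a')"
  by (simp add: had_def vec_eq_iff algebra_simps)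

lemma gate_diff:
  fixes W :: "real^'i::finite^'c::finite" and U :: "real^'c^'c"
  assumes "\<And>u v. \<bar>f u - f v\<bar> \<le> K * \<bar>u - v\<bar>" "0 \<le> K"
  shows "norm (vmap f (W *v x + U *v h + b) - vmap f (W *v x' + U *v h' + b))
         \<le> K * (opnorm W * norm (x - x') + opnorm U * norm (h - h'))"
proof -
  have "norm (vmap f (W *v x + U *v h + b) - vmap f (W *v x' + U *v h' + b))
        \<le> K * norm ((W *v x + U *v h + b) - (W *v x' + U *v h' + b))"
    by (rule norm_vmap_lip[OF assms])
  also have "(W *v x + U *v h + b) - (W *v x' + U *v h' + b) = W *v (x - x') + U *v (h - h')"
    by (simp add: matrix_vector_mult_diff_distrib)
  also have "norm (W *v (x - x') + U *v (h - h')) \<le> opnorm W * norm (x - x') + opnorm U * norm (h - h')"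
    by (rule order_trans[OF norm_triangle_ineq add_mono[OF norm_mv_le norm_mv_le]])
  finally show ?thesis using assms(2) by (simp add: mult_left_mono)
qed

lemma sigm_lip': "\<bar>sigm u - sigm v\<bar> \<le> 1/4 * \<bar>u - v\<bar>" by (rule sigm_lip)
lemma tanh_lip': "\<bar>tanh u - tanh v\<bar> \<le> 1 * \<bar>u - v\<bar>" for u v :: real by (rule tanh_lip)

lemma cell_lip:
  fixes P :: "('i::finite, 'c::finite) lstm_layer"
  assumes xm: "0 \<le> xm" and x: "\<And>j. \<bar>x $ j\<bar> \<le> xm" and x': "\<And>j. \<bar>x' $ j\<bar> \<le> xm"
    and s: "inS P xm k (c,h)" and s': "inS P xm k (c',h')"
  defines "dc \<equiv> norm (c - c')" and "dh \<equiv> norm (h - h')" and "dx \<equiv> norm (x - x')"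
  shows "norm (fst (cell P x (c,h)) - fst (cell P x' (c',h')))
           \<le> sig_f P xm k * dc + alpha_s P xm k * dh + alpha_x P xm k * dx"
    and "norm (snd (cell P x (c,h)) - snd (cell P x' (c',h')))
           \<le> sig_o P xm k * (sig_f P xm k * dc + alpha_s P xm k * dh + alpha_x P xm k * dx)
             + 1/4 * tanh (cbar P xm k) * (opnorm (Uo P) * dh + opnorm (Wo P) * dx)"
proof -
  have h: "\<And>j. \<bar>h $ j\<bar> \<le> tanh (cbar P xm k) * sig_o P xm k" and c: "\<And>j. \<bar>c $ j\<bar> \<le> cbar P xm k"
    using s by (auto simp: inS_def)
  have h': "\<And>j. \<bar>h' $ j\<bar> \<le> tanh (cbar P xm k) * sig_o P xm k" and c': "\<And>j. \<bar>c' $ j\<bar> \<le> cbar P xm k"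
    using s' by (auto simp: inS_def)
  define F where "F = vmap sigm (Wf P *v x + Uf P *v h + bf P)"
  define F' where "F' = vmap sigm (Wf P *v x' + Uf P *v h' + bf P)"
  define I where "I = vmap sigm (Wi P *v x + Ui P *v h + bi P)"
  define I' where "I' = vmap sigm (Wi P *v x' + Ui P *v h' + bi P)"
  define G where "G = vmap tanh (Wc P *v x + Uc P *v h + bc P)"
  define G' where "G' = vmap tanh (Wc P *v x' + Uc P *v h' + bc P)"
  define Og where "Og = vmap sigm (Wo P *v x + Uo P *v h + bo P)"
  define Og' where "Og' = vmap sigm (Wo P *v x' + Uo P *v h' + bo P)"
  note g = gates[OF xm x h] and g' = gates[OF xm x' h']
  let ?sf = "sig_f P xm k" and ?si = "sig_i P xm k" and ?so = "sig_o P xm k" and ?pc = "phi_c P xm k"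
    and ?cb = "cbar P xm k"
  have Fb: "\<bar>F $ j\<bar> \<le> ?sf" for j using g(1)[of j] sigm_pos by (simp add: F_def vmap_def less_imp_le)
  have Ib: "\<bar>I $ j\<bar> \<le> ?si" for j using g(2)[of j] sigm_pos by (simp add: I_def vmap_def less_imp_le)
  have Ob: "\<bar>Og $ j\<bar> \<le> ?so" for j using g(3)[of j] sigm_pos by (simp add: Og_def vmap_def less_imp_le)
  have G'b: "\<bar>G' $ j\<bar> \<le> ?pc" for j using g'(4)[of j] by (simp add: G'_def)
  have fe: "fst (cell P x (c,h)) - fst (cell P x' (c',h')) =
      had F (c - c') + had c' (F - F') + (had I (G - G') + had G' (I - I'))"
    unfolding cell_fst F_def F'_def I_def I'_def G_def G'_def
    by (simp add: had_diff[symmetric] algebra_simps)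
  have n1: "norm (had F (c - c')) \<le> ?sf * dc" unfolding dc_def by (rule norm_had_le[OF Fb])
  have dF: "norm (F - F') \<le> 1/4 * (opnorm (Wf P) * dx + opnorm (Uf P) * dh)"
    unfolding F_def F'_def dx_def dh_def by (rule gate_diff[OF sigm_lip']) simp
  have dG: "norm (G - G') \<le> 1 * (opnorm (Wc P) * dx + opnorm (Uc P) * dh)"
    unfolding G_def G'_def dx_def dh_def by (rule gate_diff[OF tanh_lip']) simp
  have dI: "norm (I - I') \<le> 1/4 * (opnorm (Wi P) * dx + opnorm (Ui P) * dh)"
    unfolding I_def I'_def dx_def dh_def by (rule gate_diff[OF sigm_lip']) simp
  have n2: "norm (had c' (F - F')) \<le> ?cb * (1/4 * (opnorm (Wf P) * dx + opnorm (Uf P) * dh))"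
    by (rule order_trans[OF norm_had_le[OF c'] mult_left_mono[OF dF cbar_nonneg]])
  have n3: "norm (had I (G - G')) \<le> ?si * (1 * (opnorm (Wc P) * dx + opnorm (Uc P) * dh))"
    by (rule order_trans[OF norm_had_le[OF Ib] mult_left_mono[OF dG less_imp_le[OF sig_i_pos]]])
  have n4: "norm (had G' (I - I')) \<le> ?pc * (1/4 * (opnorm (Wi P) * dx + opnorm (Ui P) * dh))"
    by (rule order_trans[OF norm_had_le[OF G'b] mult_left_mono[OF dI phi_c_nonneg]])
  have "norm (fst (cell P x (c,h)) - fst (cell P x' (c',h')))
     \<le> ?sf * dc + ?cb * (1/4 * (opnorm (Wf P) * dx + opnorm (Uf P) * dh))
       + (?si * (1 * (opnorm (Wc P) * dx + opnorm (Uc P) * dh)) + ?pc * (1/4 * (opnorm (Wi P) * dx + opnorm (Ui P) * dh)))"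
    unfolding fe
    by (rule order_trans[OF norm_triangle_ineq add_mono[OF order_trans[OF norm_triangle_ineq add_mono[OF n1 n2]]
          order_trans[OF norm_triangle_ineq add_mono[OF n3 n4]]]])
  also have "\<dots> = ?sf * dc + alpha_s P xm k * dh + alpha_x P xm k * dx"
    by (simp add: alpha_s_def alpha_x_def algebra_simps)
  finally show A: "norm (fst (cell P x (c,h)) - fst (cell P x' (c',h')))
           \<le> ?sf * dc + alpha_s P xm k * dh + alpha_x P xm k * dx" .
  define a where "a = fst (cell P x (c,h))"
  define a' where "a' = fst (cell P x' (c',h'))"
  have a'b: "\<bar>vmap tanh a' $ j\<bar> \<le> tanh ?cb" for j
    using cell_inv[OF xm x' s'] unfolding inS_def a'_def vmap_def by (auto intro: tanh_abs_le)
  have se: "snd (cell P x (c,h)) - snd (cell P x' (c',h')) = had Og (vmap tanh a - vmap tanh a') + had (vmap tanh a') (Og - Og')"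
    unfolding cell_snd[of P x c h] cell_snd[of P x' c' h'] Og_def Og'_def a_def a'_def
    by (simp add: had_diff)
  have m1: "norm (had Og (vmap tanh a - vmap tanh a')) \<le> ?so * (?sf * dc + alpha_s P xm k * dh + alpha_x P xm k * dx)"
  proof -
    have "norm (had Og (vmap tanh a - vmap tanh a')) \<le> ?so * norm (vmap tanh a - vmap tanh a')"
      by (rule norm_had_le[OF Ob])
    also have "\<dots> \<le> ?so * (1 * norm (a - a'))"
      by (rule mult_left_mono[OF norm_vmap_lip[OF tanh_lip']]) (auto intro: less_imp_le[OF sig_o_pos])
    also have "\<dots> \<le> ?so * (?sf * dc + alpha_s P xm k * dh + alpha_x P xm k * dx)"
      using A unfolding a_def a'_def by (auto intro!: mult_left_mono less_imp_le[OF sig_o_pos])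
    finally show ?thesis .
  qed
  have m2: "norm (had (vmap tanh a') (Og - Og')) \<le> 1/4 * tanh ?cb * (opnorm (Uo P) * dh + opnorm (Wo P) * dx)"
  proof -
    have "norm (had (vmap tanh a') (Og - Og')) \<le> tanh ?cb * norm (Og - Og')" by (rule norm_had_le[OF a'b])
    also have "\<dots> \<le> tanh ?cb * (1/4 * (opnorm (Wo P) * dx + opnorm (Uo P) * dh))"
      by (rule mult_left_mono) (unfold Og_def Og'_def dx_def dh_def, rule gate_diff[OF sigm_lip'], simp_all add: cbar_nonneg)
    finally show ?thesis by (simp add: algebra_simps)
  qed
  show "norm (snd (cell P x (c,h)) - snd (cell P x' (c',h')))
           \<le> ?so * (?sf * dc + alpha_s P xm k * dh + alpha_x P xm k * dx)
             + 1/4 * tanh ?cb * (opnorm (Uo P) * dh + opnorm (Wo P) * dx)"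
    unfolding se by (rule order_trans[OF norm_triangle_ineq add_mono[OF m1 m2]])
qed


(* ---- part E1 ---- *)


lemma quad_psd:
  fixes a g X p q :: real
  assumes "0 \<le> a" "0 \<le> g" "X\<^sup>2 \<le> a * g"
  shows "0 \<le> a * p\<^sup>2 - 2 * X * p * q + g * q\<^sup>2"
proof (cases "a = 0")
  case True
  then have "X\<^sup>2 \<le> 0" using assms by simp
  then have "X = 0" by (metis power2_less_eq_zero_iff)
  then show ?thesis using True assms by simp
next
  case False
  then have a: "0 < a" using assms by simp
  have "a * (a * p\<^sup>2 - 2 * X * p * q + g * q\<^sup>2) = (a * p - X * q)\<^sup>2 + (a * g - X\<^sup>2) * q\<^sup>2"
    by (simp add: power2_eq_square algebra_simps)
  also have "\<dots> \<ge> 0" using assms by (intro add_nonneg_nonneg mult_nonneg_nonneg) auto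
  finally show ?thesis using a by (simp add: zero_le_mult_iff)
qed

lemma poly_uv:
  fixes u v :: real
  assumes "0 \<le> v" "v \<le> u" "u \<le> 1"
  shows "(1 - u)\<^sup>2 * (1 + v\<^sup>2) \<le> (1 - v)\<^sup>2 * (1 - u\<^sup>2 + 2 * v\<^sup>2)"
proof -
  have "(1 - v)\<^sup>2 * (1 - u\<^sup>2 + 2 * v\<^sup>2) - (1 - u)\<^sup>2 * (1 + v\<^sup>2)
        = 2 * (u - v) * ((1 - u) * (1 - v) + v\<^sup>2 * (2 - u - v))"
    by (simp add: power2_eq_square algebra_simps)
  also have "\<dots> \<ge> 0" using assms
    by (intro mult_nonneg_nonneg add_nonneg_nonneg) auto
  finally show ?thesis by simp
qed

lemma geom_mid:
  fixes r :: real
  assumes r0: "0 \<le> r" and r1: "r \<le> 1" and jt: "j \<le> t"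
  shows "(\<Sum>i<j. r^i)\<^sup>2 * (1 + (r^t)\<^sup>2) \<le> (\<Sum>i<t. r^i)\<^sup>2 * (1 - (r^j)\<^sup>2 + 2 * (r^t)\<^sup>2)"
proof (cases "r = 1")
  case True
  have "real j ^ 2 \<le> real t ^ 2" using jt by (simp add: power_mono)
  then show ?thesis using True by simp
next
  case False
  then have r: "r < 1" using r1 by simp
  have v0: "0 \<le> r^t" using r0 by simp
  have vu: "r^t \<le> r^j" using power_decreasing[OF jt r0 r1] .
  have u1: "r^j \<le> 1" using r0 r1 by (simp add: power_le_one)
  have G: "(\<Sum>i<n. r^i) = (1 - r^n) / (1 - r)" for n using False by (simp add: sum_gp_strict)
  have pos: "0 < (1 - r)\<^sup>2" using r by simp
  have "(1 - r^j)\<^sup>2 * (1 + (r^t)\<^sup>2) \<le> (1 - r^t)\<^sup>2 * (1 - (r^j)\<^sup>2 + 2 * (r^t)\<^sup>2)"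
    by (rule poly_uv[OF v0 vu u1])
  then have "(1 - r^j)\<^sup>2 * (1 + (r^t)\<^sup>2) / (1 - r)\<^sup>2 \<le> (1 - r^t)\<^sup>2 * (1 - (r^j)\<^sup>2 + 2 * (r^t)\<^sup>2) / (1 - r)\<^sup>2"
    using pos by (simp add: divide_right_mono)
  then show ?thesis unfolding G by (simp add: power_divide)
qed

lemma key_ineq:
  fixes r c p q :: real
  assumes r0: "0 \<le> r" and r1: "r \<le> 1" and c0: "0 \<le> c" and jt: "j \<le> t"
  shows "(p + c * (\<Sum>i<j. r^i) * q)\<^sup>2 + (r^j * q)\<^sup>2
         \<le> (1 + r^(2*t) + c\<^sup>2 * (\<Sum>i<t. r^i)\<^sup>2) * (p\<^sup>2 + q\<^sup>2)"
proof -
  define Gj where "Gj = (\<Sum>i<j. r^i)"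
  define Gt where "Gt = (\<Sum>i<t. r^i)"
  define u where "u = r^j"
  define v where "v = r^t"
  have Gj0: "0 \<le> Gj" unfolding Gj_def using r0 by (simp add: sum_nonneg)
  have Gjt: "Gj \<le> Gt" unfolding Gj_def Gt_def using r0 jt
    by (intro sum_mono2) auto
  have u0: "0 \<le> u" and u1: "u \<le> 1" and v0: "0 \<le> v" unfolding u_def v_def using r0 r1 by (auto simp: power_le_one)
  have mid: "Gj\<^sup>2 * (1 + v\<^sup>2) \<le> Gt\<^sup>2 * (1 - u\<^sup>2 + 2 * v\<^sup>2)"
    unfolding Gj_def Gt_def u_def v_def by (rule geom_mid[OF r0 r1 jt])
  define X where "X = c * Gj"
  define Y where "Y = c * Gt"
  have XY: "X\<^sup>2 \<le> Y\<^sup>2" unfolding X_def Y_def using Gj0 Gjt c0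
    by (simp add: power_mono mult_left_mono power_mult_distrib mult_nonneg_nonneg)
  define a where "a = Y\<^sup>2 + v\<^sup>2"
  define g where "g = 1 - u\<^sup>2 + Y\<^sup>2 + v\<^sup>2 - X\<^sup>2"
  have a0: "0 \<le> a" unfolding a_def by simp
  have u2: "u\<^sup>2 \<le> 1" using u0 u1 by (simp add: power_le_one)
  have g0: "0 \<le> g" unfolding g_def using XY u2 zero_le_power2[of v] by linarith
  have "a * g - X\<^sup>2 = Y\<^sup>2 * (Y\<^sup>2 - X\<^sup>2) + c\<^sup>2 * (Gt\<^sup>2 * (1 - u\<^sup>2 + 2 * v\<^sup>2) - Gj\<^sup>2 * (1 + v\<^sup>2))
                      + v\<^sup>2 * (1 - u\<^sup>2 + v\<^sup>2)"
    unfolding a_def g_def X_def Y_def by (simp add: power2_eq_square algebra_simps)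
  also have "\<dots> \<ge> 0" using XY mid u2
    by (intro add_nonneg_nonneg mult_nonneg_nonneg) auto
  finally have ag: "X\<^sup>2 \<le> a * g" by simp
  have "0 \<le> a * p\<^sup>2 - 2 * X * p * q + g * q\<^sup>2" by (rule quad_psd[OF a0 g0 ag])
  moreover have "(1 + r^(2*t) + c\<^sup>2 * Gt\<^sup>2) * (p\<^sup>2 + q\<^sup>2) - ((p + X * q)\<^sup>2 + (u * q)\<^sup>2)
       = a * p\<^sup>2 - 2 * X * p * q + g * q\<^sup>2"
    unfolding a_def g_def X_def Y_def v_def by (simp add: power2_eq_square power_mult algebra_simps)
  ultimately show ?thesis unfolding X_def u_def Gj_def Gt_def by (simp add: mult.assoc)
qed


(* ---- part E2 ---- *)


definition cv :: "real^'n \<Rightarrow> complex^'n" where "cv e = (\<chi> i. complex_of_real (e$i))"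

definition cin :: "complex^'n::finite \<Rightarrow> complex^'n \<Rightarrow> complex" where
  "cin x y = (\<Sum>i\<in>UNIV. x$i * cnj (y$i))"

definition Tm :: "real \<Rightarrow> complex \<Rightarrow> real \<Rightarrow> complex^2^2" where
  "Tm lam1 nu lam2 = (\<chi> i j. if i = 1 \<and> j = 1 then complex_of_real lam1
                           else if i = 1 \<and> j = 2 then nu
                           else if i = 2 \<and> j = 2 then complex_of_real lam2 else 0)"

lemma norm_cv: "norm (cv e) = norm (e::real^'n::finite)"
  unfolding norm_vec_def cv_def by simp

lemma cmat_mv: "cmat A *v cv e = cv (A *v e)"
  by (simp add: cmat_def cv_def matrix_vector_mult_def vec_eq_iff)

lemma cv_iter: "cv (((*v) A ^^ j) e) = (((*v) (cmat A)) ^^ j) (cv e)" for A :: "real^'n::finite^'n"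
proof (induction j)
  case 0 then show ?case by simp
next
  case (Suc j)
  have "(((*v) (cmat A)) ^^ Suc j) (cv e) = cmat A *v cv (((*v) A ^^ j) e)" using Suc.IH by simp
  then show ?case by (simp add: cmat_mv)
qed

lemma cin_norm: "complex_of_real ((norm x)\<^sup>2) = cin x (x::complex^'n::finite)"
proof -
  have "(norm x)\<^sup>2 = (\<Sum>i\<in>UNIV. (norm (x$i))\<^sup>2)"
    unfolding norm_vec_def L2_set_def by (simp add: sum_nonneg)
  then have "complex_of_real ((norm x)\<^sup>2) = (\<Sum>i\<in>UNIV. complex_of_real ((norm (x$i))\<^sup>2))"
    by (simp only: of_real_sum)
  also have "\<dots> = cin x x" unfolding cin_def by (rule sum.cong[OF refl]) (rule complex_norm_square)
  finally show ?thesis .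
qed

lemma cin_adj: "cin (M *v x) y = cin x (cadj M *v y)"
  for M :: "complex^'n::finite^'m::finite"
proof -
  have "cin (M *v x) y = (\<Sum>i\<in>UNIV. \<Sum>j\<in>UNIV. M$i$j * x$j * cnj (y$i))"
    by (simp add: cin_def matrix_vector_mult_def sum_distrib_right)
  also have "\<dots> = (\<Sum>j\<in>UNIV. \<Sum>i\<in>UNIV. M$i$j * x$j * cnj (y$i))" by (rule sum.swap)
  also have "\<dots> = cin x (cadj M *v y)"
    by (simp add: cin_def matrix_vector_mult_def cadj_def sum_distrib_left mult_ac)
  finally show ?thesis .
qed

lemma unitary_norm:
  assumes "cadj U ** U = mat 1"
  shows "norm (U *v x) = norm (x::complex^'n::finite)"
proof -
  have "cin (U *v x) (U *v x) = cin x x"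
    by (simp add: cin_adj matrix_vector_mul_assoc assms)
  then have "complex_of_real ((norm (U *v x))\<^sup>2) = complex_of_real ((norm x)\<^sup>2)"
    by (simp only: cin_norm)
  then have "(norm (U *v x))\<^sup>2 = (norm x)\<^sup>2" using of_real_eq_iff by blast
  then show ?thesis by (simp add: power2_eq_iff_nonneg)
qed

lemma cadj_cadj: "cadj (cadj U) = U"
  by (simp add: cadj_def vec_eq_iff)

lemma schur_iter:
  assumes "cadj U ** U = mat 1" "U ** cadj U = mat 1"
  shows "(((*v) (U ** T ** cadj U)) ^^ j) v = U *v ((((*v) T) ^^ j) (cadj U *v v))"
proof (induction j)
  case 0 then show ?case by (simp add: matrix_vector_mul_assoc assms)
next
  case (Suc j)
  have "(((*v) (U ** T ** cadj U)) ^^ Suc j) v = (U ** T ** cadj U) *v (U *v ((((*v) T) ^^ j) (cadj U *v v)))"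
    using Suc by simp
  also have "\<dots> = U *v (T *v ((cadj U ** U) *v ((((*v) T) ^^ j) (cadj U *v v))))"
    by (simp add: matrix_vector_mul_assoc matrix_mul_assoc)
  also have "\<dots> = U *v ((((*v) T) ^^ Suc j) (cadj U *v v))" by (simp add: assms)
  finally show ?case .
qed

fun ssum :: "complex \<Rightarrow> complex \<Rightarrow> nat \<Rightarrow> complex" where
  "ssum a b 0 = 0"
| "ssum a b (Suc j) = a * ssum a b j + b ^ j"

lemma one_neq_two_2: "(1::2) \<noteq> 2" by simp

lemma Tm_mv1: "(Tm l1 nu l2 *v w) $ 1 = complex_of_real l1 * w$1 + nu * w$2"
  by (simp add: Tm_def matrix_vector_mult_def sum_2)
lemma Tm_mv2: "(Tm l1 nu l2 *v w) $ 2 = complex_of_real l2 * w$2"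
  by (simp add: Tm_def matrix_vector_mult_def sum_2)

lemma Tm_iter:
  "(((*v) (Tm l1 nu l2)) ^^ j) w $ 1 = complex_of_real l1 ^ j * w$1 + nu * ssum l1 l2 j * w$2"
  "(((*v) (Tm l1 nu l2)) ^^ j) w $ 2 = complex_of_real l2 ^ j * w$2"
proof (induction j)
  case 0
  { case 1 show ?case by simp }
  { case 2 show ?case by simp }
next
  case (Suc j)
  { case 1 show ?case using Suc by (simp add: Tm_mv1 algebra_simps) }
  { case 2 show ?case using Suc by (simp add: Tm_mv2) }
qed


(* ---- part E3 ---- *)


lemma ssum_bound:
  assumes l1: "0 < l1"
  shows "cmod (ssum (complex_of_real l1) (complex_of_real l2) j) * l1 \<le> l1^j * (\<Sum>i<j. (\<bar>l2\<bar>/l1)^i)"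
proof (induction j)
  case 0 then show ?case by simp
next
  case (Suc j)
  let ?s = "ssum (complex_of_real l1) (complex_of_real l2) j"
  have "cmod (ssum (complex_of_real l1) (complex_of_real l2) (Suc j)) \<le> l1 * cmod ?s + \<bar>l2\<bar>^j"
    using norm_triangle_ineq[of "complex_of_real l1 * ?s" "complex_of_real l2 ^ j"] l1
    by (simp add: norm_mult norm_power)
  then have "cmod (ssum (complex_of_real l1) (complex_of_real l2) (Suc j)) * l1 \<le> (l1 * cmod ?s + \<bar>l2\<bar>^j) * l1"
    using l1 by (simp add: mult_right_mono)
  also have "\<dots> = l1 * (cmod ?s * l1) + l1 * \<bar>l2\<bar>^j" by (simp add: algebra_simps)
  also have "\<dots> \<le> l1 * (l1^j * (\<Sum>i<j. (\<bar>l2\<bar>/l1)^i)) + l1 * \<bar>l2\<bar>^j"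
    using Suc.IH l1 by (simp add: mult_left_mono)
  also have "l1 * \<bar>l2\<bar>^j = l1^Suc j * (\<bar>l2\<bar>/l1)^j"
    using l1 by (simp add: power_divide field_simps)
  also have "l1 * (l1^j * (\<Sum>i<j. (\<bar>l2\<bar>/l1)^i)) + l1^Suc j * (\<bar>l2\<bar>/l1)^j = l1^Suc j * (\<Sum>i<Suc j. (\<bar>l2\<bar>/l1)^i)"
    by (simp add: algebra_simps)
  finally show ?case .
qed

lemma norm_c2: "norm (v :: complex^2) = sqrt ((cmod (v$1))\<^sup>2 + (cmod (v$2))\<^sup>2)"
  unfolding norm_vec_def L2_set_def by (simp add: sum_2)

lemma mu_fn_eq:
  assumes l1: "0 < l1"
  shows "mu_fn l1 nu l2 t = sqrt (1 + (\<bar>l2\<bar>/l1)^(2*t) + (cmod nu / l1)\<^sup>2 * (\<Sum>i<t. (\<bar>l2\<bar>/l1)^i)\<^sup>2)"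
proof -
  define r where "r = \<bar>l2\<bar>/l1"
  have a: "\<bar>l2\<bar> / \<bar>l1\<bar> = r" unfolding r_def using l1 by simp
  have b: "(if r = 1 then real t else (1 - r^t)/(1-r)) = (\<Sum>i<t. r^i)" by (simp add: sum_gp_strict)
  have c: "(cmod nu)\<^sup>2 / \<bar>l1\<bar>\<^sup>2 = (cmod nu / l1)\<^sup>2" using l1 by (simp add: power_divide)
  show ?thesis unfolding mu_fn_def Let_def a b c r_def[symmetric] by simp
qed

lemma mu_fn_nonneg: "0 \<le> mu_fn l1 nu l2 t"
  unfolding mu_fn_def Let_def by simp

lemma Tm_pow_norm:
  assumes l1: "0 < l1" and l2: "\<bar>l2\<bar> \<le> l1" and jt: "j \<le> t"
  shows "norm ((((*v) (Tm l1 nu l2)) ^^ j) w) \<le> mu_fn l1 nu l2 t * l1^j * norm w"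
proof -
  define r where "r = \<bar>l2\<bar>/l1"
  define c where "c = cmod nu / l1"
  define p where "p = cmod (w$1)"
  define q where "q = cmod (w$2)"
  define G where "G n = (\<Sum>i<n. r^i)" for n
  have r0: "0 \<le> r" and r1: "r \<le> 1" unfolding r_def using l1 l2 by auto
  have c0: "0 \<le> c" unfolding c_def using l1 by simp
  have p0: "0 \<le> p" and q0: "0 \<le> q" unfolding p_def q_def by auto
  have G0: "0 \<le> G j" unfolding G_def using r0 by (simp add: sum_nonneg)
  let ?z = "(((*v) (Tm l1 nu l2)) ^^ j) w"
  have z1: "cmod (?z$1) \<le> l1^j * (p + c * G j * q)"
  proof -
    have "cmod (?z$1) \<le> cmod (complex_of_real l1 ^ j * w $ 1) + cmod (nu * ssum l1 l2 j * w $ 2)"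
      unfolding Tm_iter by (rule norm_triangle_ineq)
    also have "\<dots> = l1^j * p + cmod nu * cmod (ssum l1 l2 j) * q"
      unfolding p_def q_def using l1 by (simp add: norm_mult norm_power)
    also have "cmod nu * cmod (ssum l1 l2 j) = c * (cmod (ssum l1 l2 j) * l1)"
      unfolding c_def using l1 by simp
    also have "\<dots> \<le> c * (l1^j * G j)"
      unfolding G_def r_def by (rule mult_left_mono[OF ssum_bound[OF l1] c0])
    finally show ?thesis using q0 by (simp add: algebra_simps mult_right_mono)
  qed
  have z2: "cmod (?z$2) = l1^j * (r^j * q)"
    unfolding Tm_iter q_def r_def using l1 by (simp add: norm_mult norm_power power_divide)
  have "(cmod (?z$1))\<^sup>2 \<le> (l1^j * (p + c * G j * q))\<^sup>2"
    using z1 by (rule power_mono) simp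
  also have "(l1^j * (p + c * G j * q))\<^sup>2 = (l1^j)\<^sup>2 * (p + c * G j * q)\<^sup>2" by (rule power_mult_distrib)
  finally have "(cmod (?z$1))\<^sup>2 + (cmod (?z$2))\<^sup>2 \<le> (l1^j)\<^sup>2 * (p + c * G j * q)\<^sup>2 + (l1^j)\<^sup>2 * (r^j * q)\<^sup>2"
    unfolding z2 power_mult_distrib[of "l1^j" "r^j * q"] by simp
  then have "(cmod (?z$1))\<^sup>2 + (cmod (?z$2))\<^sup>2 \<le> (l1^j)\<^sup>2 * ((p + c * G j * q)\<^sup>2 + (r^j * q)\<^sup>2)"
    by (simp add: distrib_left)
  also have "\<dots> \<le> (l1^j)\<^sup>2 * ((1 + r^(2*t) + c\<^sup>2 * (G t)\<^sup>2) * (p\<^sup>2 + q\<^sup>2))"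
    unfolding G_def by (rule mult_left_mono[OF key_ineq[OF r0 r1 c0 jt]]) simp
  finally have "sqrt ((cmod (?z$1))\<^sup>2 + (cmod (?z$2))\<^sup>2) \<le> sqrt ((l1^j)\<^sup>2 * ((1 + r^(2*t) + c\<^sup>2 * (G t)\<^sup>2) * (p\<^sup>2 + q\<^sup>2)))"
    by (rule real_sqrt_le_mono)
  also have "\<dots> = l1^j * sqrt (1 + r^(2*t) + c\<^sup>2 * (G t)\<^sup>2) * sqrt (p\<^sup>2 + q\<^sup>2)"
    using l1 by (simp add: real_sqrt_mult)
  finally show ?thesis
    unfolding norm_c2[of ?z] norm_c2[of w] mu_fn_eq[OF l1] p_def q_def r_def c_def G_def
    by (simp add: mult_ac)
qed

lemma schur2_parts:
  assumes "schur2 A U l1 nu l2"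
  shows "cadj U ** U = mat 1" "U ** cadj U = mat 1" "cmat A = U ** Tm l1 nu l2 ** cadj U" "l2 \<le> l1"
  using assms unfolding schur2_def Tm_def by auto

lemma pow_bound:
  fixes A :: "real^2^2"
  assumes s: "schur2 A U l1 nu l2" and l1: "0 < l1" and l2: "\<bar>l2\<bar> \<le> l1" and jt: "j \<le> t"
  shows "norm (((*v) A ^^ j) e) \<le> mu_fn l1 nu l2 t * l1^j * norm e"
proof -
  note sp = schur2_parts[OF s]
  have "norm (((*v) A ^^ j) e) = norm (cv (((*v) A ^^ j) e))" by (simp add: norm_cv)
  also have "\<dots> = norm (U *v ((((*v) (Tm l1 nu l2)) ^^ j) (cadj U *v cv e)))"
    unfolding cv_iter sp(3) schur_iter[OF sp(1,2)] ..
  also have "\<dots> = norm ((((*v) (Tm l1 nu l2)) ^^ j) (cadj U *v cv e))" by (rule unitary_norm[OF sp(1)])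
  also have "\<dots> \<le> mu_fn l1 nu l2 t * l1^j * norm (cadj U *v cv e)" by (rule Tm_pow_norm[OF l1 l2 jt])
  also have "norm (cadj U *v cv e) = norm e"
    using unitary_norm[of "cadj U" "cv e"] sp(2) by (simp add: cadj_cadj norm_cv)
  finally show ?thesis .
qed

lemma schur_trace:
  fixes A :: "real^2^2"
  assumes s: "schur2 A U l1 nu l2"
  shows "l1 + l2 = A$1$1 + A$2$2"
proof -
  note sp = schur2_parts[OF s]
  have "trace (cmat A) = trace (cadj U ** (U ** Tm l1 nu l2))" unfolding sp(3) by (rule trace_mul_sym)
  also have "\<dots> = trace (Tm l1 nu l2)" by (simp add: matrix_mul_assoc sp(1))
  finally have "trace (cmat A) = trace (Tm l1 nu l2)" .
  then have "complex_of_real (A$1$1 + A$2$2) = complex_of_real (l1 + l2)"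
    by (simp add: trace_def sum_2 cmat_def Tm_def)
  then show ?thesis using of_real_eq_iff by metis
qed


(* ---- part E4 ---- *)


lemma mv_scalar_c: "M *v (c *s x) = c *s (M *v x)" for M :: "complex^'n::finite^'m::finite"
  by (simp add: vec_eq_iff matrix_vector_mult_def sum_distrib_left mult_ac)

lemma spec_rad_ge:
  fixes A :: "real^2^2"
  assumes s: "schur2 A U l1 nu l2"
  shows "\<bar>l1\<bar> \<le> spec_rad (cmat A)"
proof -
  note sp = schur2_parts[OF s]
  define S where "S = {cmod z | z. \<exists>v. v \<noteq> 0 \<and> cmat A *v v = z *s v}"
  have key: "cadj U *v (cmat A *v v) = Tm l1 nu l2 *v (cadj U *v v)" for v
    unfolding sp(3) by (simp add: matrix_vector_mul_assoc matrix_mul_assoc sp(1))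
  have sub: "S \<subseteq> {\<bar>l1\<bar>, \<bar>l2\<bar>}"
  proof
    fix y assume "y \<in> S"
    then obtain z v where y: "y = cmod z" and v: "v \<noteq> 0" and ev: "cmat A *v v = z *s v"
      unfolding S_def by blast
    define w where "w = cadj U *v v"
    have "norm w = norm v" unfolding w_def using unitary_norm[of "cadj U" v] sp(2) by (simp add: cadj_cadj)
    then have w0: "w \<noteq> 0" using v by auto
    have Tw: "Tm l1 nu l2 *v w = z *s w" unfolding w_def key[symmetric] ev mv_scalar_c ..
    have e1: "complex_of_real l1 * w$1 + nu * w$2 = z * w$1"
      using arg_cong[OF Tw, of "\<lambda>u. u$1"] by (simp add: Tm_mv1)
    have e2: "complex_of_real l2 * w$2 = z * w$2"
      using arg_cong[OF Tw, of "\<lambda>u. u$2"] by (simp add: Tm_mv2)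
    show "y \<in> {\<bar>l1\<bar>, \<bar>l2\<bar>}"
    proof (cases "w$2 = 0")
      case True
      then have "w$1 \<noteq> 0" using w0 by (auto simp: vec_eq_iff forall_2)
      then have "z = complex_of_real l1" using e1 True by simp
      then show ?thesis using y by simp
    next
      case False
      then have "z = complex_of_real l2" using e2 by simp
      then show ?thesis using y by simp
    qed
  qed
  have mem: "\<bar>l1\<bar> \<in> S"
  proof -
    define e where "e = (axis 1 1 :: complex^2)"
    define v where "v = U *v e"
    have "norm v = norm e" unfolding v_def by (rule unitary_norm[OF sp(1)])
    moreover have "e $ 1 = 1" by (simp add: e_def axis_def)
    then have "e \<noteq> 0" by auto
    ultimately have v0: "v \<noteq> 0" by auto
    have Te: "Tm l1 nu l2 *v e = complex_of_real l1 *s e"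
      by (simp add: vec_eq_iff forall_2 Tm_mv1 Tm_mv2 e_def axis_def)
    have "cmat A *v v = U *v (Tm l1 nu l2 *v ((cadj U ** U) *v e))"
      unfolding v_def sp(3) by (simp add: matrix_vector_mul_assoc matrix_mul_assoc)
    also have "\<dots> = complex_of_real l1 *s v" unfolding v_def by (simp add: sp(1) Te mv_scalar_c)
    finally have "cmat A *v v = complex_of_real l1 *s v" .
    then show ?thesis unfolding S_def using v0 by force
  qed
  have "bdd_above {\<bar>l1\<bar>, \<bar>l2\<bar>}" by (rule bdd_above_finite) simp
  then have "bdd_above S" using sub by (rule bdd_above_mono)
  then have "\<bar>l1\<bar> \<le> Sup S" using mem by (rule cSup_upper[rotated])
  then show ?thesis unfolding spec_rad_def S_def .
qed

lemma schur_lam: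
  fixes A :: "real^2^2"
  assumes s: "schur2 A U l1 nu l2" and tr: "0 < A$1$1 + A$2$2"
  shows "0 < l1" "\<bar>l2\<bar> \<le> l1"
  using schur_trace[OF s] schur2_parts(4)[OF s] tr by auto


(* ---- part F ---- *)


lemma mv_mono:
  fixes A :: "real^'n::finite^'m::finite"
  assumes "\<And>i j. 0 \<le> A$i$j" "x \<le> y"
  shows "A *v x \<le> A *v y"
  using assms unfolding less_eq_vec_def
  by (auto simp: matrix_vector_mult_def intro!: sum_mono mult_left_mono)

lemma mv_sum: "A *v (\<Sum>i\<in>S. f i) = (\<Sum>i\<in>S. A *v f i)" for A :: "real^'n::finite^'m::finite"
  by (induction S rule: infinite_finite_induct) (simp_all add: matrix_vector_right_distrib)

lemma mv_scaleR: "A *v (c *\<^sub>R x) = c *\<^sub>R (A *v x)" for A :: "real^'n::finite^'m::finite"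
  by (simp add: vec_eq_iff matrix_vector_mult_def sum_distrib_left mult_ac)

lemma lin_rec:
  fixes A :: "real^'n::finite^'n" and a :: "real^'n" and E :: "nat \<Rightarrow> real^'n"
  assumes A0: "\<And>i j. 0 \<le> A$i$j"
    and step: "\<And>\<tau>. E (Suc \<tau>) \<le> A *v E \<tau> + d \<tau> *\<^sub>R a"
  shows "E \<tau> \<le> ((*v) A ^^ \<tau>) (E 0) + (\<Sum>\<sigma><\<tau>. d \<sigma> *\<^sub>R ((*v) A ^^ (\<tau> - 1 - \<sigma>)) a)"
proof (induction \<tau>)
  case 0 then show ?case by simp
next
  case (Suc \<tau>)
  have "E (Suc \<tau>) \<le> A *v E \<tau> + d \<tau> *\<^sub>R a" by (rule step)
  also have "\<dots> \<le> A *v (((*v) A ^^ \<tau>) (E 0) + (\<Sum>\<sigma><\<tau>. d \<sigma> *\<^sub>R ((*v) A ^^ (\<tau> - 1 - \<sigma>)) a)) + d \<tau> *\<^sub>R a"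
    using mv_mono[OF A0 Suc.IH] by (simp add: add_right_mono)
  also have "\<dots> = ((*v) A ^^ Suc \<tau>) (E 0) + ((\<Sum>\<sigma><\<tau>. d \<sigma> *\<^sub>R ((*v) A ^^ (Suc \<tau> - 1 - \<sigma>)) a) + d \<tau> *\<^sub>R ((*v) A ^^ (Suc \<tau> - 1 - \<tau>)) a)"
  proof -
    have "A *v (\<Sum>\<sigma><\<tau>. d \<sigma> *\<^sub>R ((*v) A ^^ (\<tau> - 1 - \<sigma>)) a) = (\<Sum>\<sigma><\<tau>. d \<sigma> *\<^sub>R ((*v) A ^^ (Suc \<tau> - 1 - \<sigma>)) a)"
    proof -
      have "A *v (\<Sum>\<sigma><\<tau>. d \<sigma> *\<^sub>R ((*v) A ^^ (\<tau> - 1 - \<sigma>)) a) = (\<Sum>\<sigma><\<tau>. d \<sigma> *\<^sub>R (A *v ((*v) A ^^ (\<tau> - 1 - \<sigma>)) a))"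
        by (simp add: mv_sum mv_scaleR)
      also have "\<dots> = (\<Sum>\<sigma><\<tau>. d \<sigma> *\<^sub>R ((*v) A ^^ (Suc \<tau> - 1 - \<sigma>)) a)"
      proof (rule sum.cong[OF refl])
        fix \<sigma> assume "\<sigma> \<in> {..<\<tau>}"
        then have "Suc \<tau> - 1 - \<sigma> = Suc (\<tau> - 1 - \<sigma>)" by auto
        then show "d \<sigma> *\<^sub>R (A *v ((*v) A ^^ (\<tau> - 1 - \<sigma>)) a) = d \<sigma> *\<^sub>R ((*v) A ^^ (Suc \<tau> - 1 - \<sigma>)) a"
          by simp
      qed
      finally show ?thesis .
    qed
    then show ?thesis by (simp add: matrix_vector_right_distrib)
  qed
  also have "\<dots> = ((*v) A ^^ Suc \<tau>) (E 0) + (\<Sum>\<sigma><Suc \<tau>. d \<sigma> *\<^sub>R ((*v) A ^^ (Suc \<tau> - 1 - \<sigma>)) a)"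
    by simp
  finally show ?case .
qed

lemma lin_rec_norm:
  fixes A :: "real^'n::finite^'n" and a :: "real^'n" and E :: "nat \<Rightarrow> real^'n"
  assumes A0: "\<And>i j. 0 \<le> A$i$j" and E0: "\<And>\<tau>. 0 \<le> E \<tau>" and d0: "\<And>\<sigma>. 0 \<le> d \<sigma>"
    and step: "\<And>\<tau>. E (Suc \<tau>) \<le> A *v E \<tau> + d \<tau> *\<^sub>R a"
  shows "norm (E \<tau>) \<le> norm (((*v) A ^^ \<tau>) (E 0)) + (\<Sum>\<sigma><\<tau>. d \<sigma> * norm (((*v) A ^^ (\<tau> - 1 - \<sigma>)) a))"
proof -
  let ?R = "((*v) A ^^ \<tau>) (E 0) + (\<Sum>\<sigma><\<tau>. d \<sigma> *\<^sub>R ((*v) A ^^ (\<tau> - 1 - \<sigma>)) a)"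
  have le: "E \<tau> \<le> ?R" by (rule lin_rec[where A=A and E=E and d=d and a=a, OF A0 step])
  have "norm (E \<tau>) \<le> norm ?R"
  proof (rule norm_le_componentwise_cart)
    fix i
    have "0 \<le> E \<tau> $ i" "E \<tau> $ i \<le> ?R $ i" using E0[of \<tau>] le unfolding less_eq_vec_def by auto
    then show "norm (E \<tau> $ i) \<le> norm (?R $ i)" by simp
  qed
  also have "\<dots> \<le> norm (((*v) A ^^ \<tau>) (E 0)) + norm (\<Sum>\<sigma><\<tau>. d \<sigma> *\<^sub>R ((*v) A ^^ (\<tau> - 1 - \<sigma>)) a)"
    by (rule norm_triangle_ineq)
  also have "norm (\<Sum>\<sigma><\<tau>. d \<sigma> *\<^sub>R ((*v) A ^^ (\<tau> - 1 - \<sigma>)) a) \<le> (\<Sum>\<sigma><\<tau>. norm (d \<sigma> *\<^sub>R ((*v) A ^^ (\<tau> - 1 - \<sigma>)) a))"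
    by (rule norm_sum)
  also have "\<dots> = (\<Sum>\<sigma><\<tau>. d \<sigma> * norm (((*v) A ^^ (\<tau> - 1 - \<sigma>)) a))"
    using d0 by simp
  finally show ?thesis by simp
qed

lemma layer_bound:
  fixes A :: "real^2^2" and a :: "real^2" and E :: "nat \<Rightarrow> real^2"
  assumes s: "schur2 A U l1 nu l2" and l1: "0 < l1" and l2: "\<bar>l2\<bar> \<le> l1" and rho: "l1 \<le> \<rho>"
    and A0: "\<And>i j. 0 \<le> A$i$j" and E0: "\<And>\<tau>. 0 \<le> E \<tau>" and d0: "\<And>\<sigma>. 0 \<le> d \<sigma>"
    and step: "\<And>\<tau>. E (Suc \<tau>) \<le> A *v E \<tau> + d \<tau> *\<^sub>R a"
    and tt: "\<tau> \<le> t"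
  shows "norm (E \<tau>) \<le> mu_fn l1 nu l2 t * \<rho>^\<tau> * norm (E 0)
           + norm a * mu_fn l1 nu l2 t * (\<Sum>\<sigma><\<tau>. \<rho>^(\<tau> - 1 - \<sigma>) * d \<sigma>)"
proof -
  have pb: "norm (((*v) A ^^ j) v) \<le> mu_fn l1 nu l2 t * \<rho>^j * norm v" if "j \<le> t" for j v
  proof -
    have "norm (((*v) A ^^ j) v) \<le> mu_fn l1 nu l2 t * l1^j * norm v" by (rule pow_bound[OF s l1 l2 that])
    also have "\<dots> \<le> mu_fn l1 nu l2 t * \<rho>^j * norm v"
      using l1 rho by (intro mult_right_mono mult_left_mono power_mono) (auto simp: mu_fn_nonneg)
    finally show ?thesis .
  qed
  have "norm (E \<tau>) \<le> norm (((*v) A ^^ \<tau>) (E 0)) + (\<Sum>\<sigma><\<tau>. d \<sigma> * norm (((*v) A ^^ (\<tau> - 1 - \<sigma>)) a))"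
    by (rule lin_rec_norm[where A=A and E=E and d=d and a=a, OF A0 E0 d0 step])
  also have "\<dots> \<le> mu_fn l1 nu l2 t * \<rho>^\<tau> * norm (E 0) + (\<Sum>\<sigma><\<tau>. d \<sigma> * (mu_fn l1 nu l2 t * \<rho>^(\<tau> - 1 - \<sigma>) * norm a))"
    using tt d0 by (intro add_mono pb sum_mono mult_left_mono) auto
  also have "(\<Sum>\<sigma><\<tau>. d \<sigma> * (mu_fn l1 nu l2 t * \<rho>^(\<tau> - 1 - \<sigma>) * norm a))
      = norm a * mu_fn l1 nu l2 t * (\<Sum>\<sigma><\<tau>. \<rho>^(\<tau> - 1 - \<sigma>) * d \<sigma>)"
    by (simp add: sum_distrib_left mult_ac)
  finally show ?thesis .
qed


(* ---- part G ---- *)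


definition Hb :: "(nat \<Rightarrow> real) \<Rightarrow> (nat \<Rightarrow> nat \<Rightarrow> real) \<Rightarrow> (nat \<Rightarrow> real) \<Rightarrow> (nat \<Rightarrow> real)
    \<Rightarrow> nat \<Rightarrow> nat \<Rightarrow> nat \<Rightarrow> real" where
  "Hb rho mu ax s l t \<tau> = (\<Sum>m\<in>{1..l}. (\<Prod>i\<in>{m..l}. mu i t) * real ((\<tau> + (l - m)) choose (l - m))
       * (MAX i\<in>{m..l}. rho i ^ \<tau>) * (\<Prod>i\<in>{m+1..l}. ax i) * s m)"

lemma hockey:
  "(\<Sum>\<sigma><\<tau>. real ((Suc \<sigma> + n) choose n)) \<le> real ((\<tau> + Suc n) choose Suc n)"
proof -
  have "(\<Sum>\<sigma><\<tau>. real ((Suc \<sigma> + n) choose n)) \<le> real ((0 + n) choose n) + (\<Sum>\<sigma><\<tau>. real ((Suc \<sigma> + n) choose n))"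
    by simp
  also have "\<dots> = (\<Sum>j<Suc \<tau>. real ((j + n) choose n))"
    by (rule sum.lessThan_Suc_shift[symmetric])
  also have "\<dots> = real (\<Sum>j\<le>\<tau>. ((n + j) choose n))" by (simp add: lessThan_Suc_atMost add.commute)
  also have "\<dots> = real ((n + \<tau> + 1) choose (n + 1))" by (simp only: choose_rising_sum(1))
  finally show ?thesis by (simp add: add.commute)
qed

lemma max_pow_le:
  fixes rho :: "nat \<Rightarrow> real"
  assumes r0: "\<And>i. 0 \<le> rho i" and ne: "m \<le> l"
  shows "(MAX i\<in>{m..l}. rho i ^ n) = (MAX i\<in>{m..l}. rho i) ^ n"
proof -
  have "Max (rho ` {m..l}) \<in> rho ` {m..l}" using ne by (intro Max_in) auto
  then obtain i0 where i0: "i0 \<in> {m..l}" "rho i0 = (MAX i\<in>{m..l}. rho i)" by (metis imageE)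
  have le: "rho i \<le> rho i0" if "i \<in> {m..l}" for i using i0 that by simp
  show ?thesis
  proof (rule antisym)
    show "(MAX i\<in>{m..l}. rho i ^ n) \<le> (MAX i\<in>{m..l}. rho i) ^ n"
      using ne i0 by (auto simp: Max_le_iff intro!: power_mono le r0)
    show "(MAX i\<in>{m..l}. rho i) ^ n \<le> (MAX i\<in>{m..l}. rho i ^ n)"
      unfolding i0(2)[symmetric] using i0(1) by (intro Max_ge) auto
  qed
qed

lemma multi_layer_H:
  fixes F :: "nat \<Rightarrow> nat \<Rightarrow> real" and rho ax s :: "nat \<Rightarrow> real" and mu :: "nat \<Rightarrow> nat \<Rightarrow> real"
  assumes rho0: "\<And>l. 0 \<le> rho l" and mu0: "\<And>l t. 0 \<le> mu l t" and ax0: "\<And>l. 0 \<le> ax l" and s0: "\<And>l. 0 \<le> s l"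
    and base1: "\<And>t \<tau>. \<tau> \<le> t \<Longrightarrow> F 1 \<tau> \<le> mu 1 t * rho 1 ^ \<tau> * s 1"
    and stepL: "\<And>l t \<tau>. 2 \<le> l \<Longrightarrow> l \<le> L \<Longrightarrow> \<tau> \<le> t \<Longrightarrow>
       F l \<tau> \<le> mu l t * rho l ^ \<tau> * s l + ax l * mu l t * (\<Sum>\<sigma><\<tau>. rho l ^ (\<tau> - 1 - \<sigma>) * F (l - 1) (Suc \<sigma>))"
  shows "1 \<le> l \<Longrightarrow> l \<le> L \<Longrightarrow> \<forall>\<tau>. \<tau> \<le> t \<longrightarrow> F l \<tau> \<le> Hb rho mu ax s l t \<tau>"
proof (induction l rule: nat_induct_at_least)
  case base
  then show ?case using base1[of _ t] by (simp add: Hb_def)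
next
  case (Suc l')
  show ?case
  proof (intro allI impI)
  fix \<tau> assume "\<tau> \<le> t"
  note Suc.prems this
  let ?l = "Suc l'"
  define T' where "T' m \<sigma>' = (\<Prod>i\<in>{m..l'}. mu i t) * real ((\<sigma>' + (l' - m)) choose (l' - m))
       * (MAX i\<in>{m..l'}. rho i ^ \<sigma>') * (\<Prod>i\<in>{m+1..l'}. ax i) * s m" for m \<sigma>'
  have IH: "F l' (Suc \<sigma>) \<le> (\<Sum>m\<in>{1..l'}. T' m (Suc \<sigma>))" if "\<sigma> < \<tau>" for \<sigma>
  proof -
    have IHl: "\<forall>\<tau>'\<le>t. F l' \<tau>' \<le> Hb rho mu ax s l' t \<tau>'" using Suc.IH Suc.prems by simp
    have "F l' (Suc \<sigma>) \<le> Hb rho mu ax s l' t (Suc \<sigma>)" using IHl that \<open>\<tau> \<le> t\<close> by simp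
    then show ?thesis unfolding Hb_def T'_def .
  qed
  have "F ?l \<tau> \<le> mu ?l t * rho ?l ^ \<tau> * s ?l + ax ?l * mu ?l t * (\<Sum>\<sigma><\<tau>. rho ?l ^ (\<tau> - 1 - \<sigma>) * F l' (Suc \<sigma>))"
    using stepL[of ?l \<tau> t] Suc.prems \<open>\<tau> \<le> t\<close> Suc.hyps by auto
  also have "\<dots> \<le> mu ?l t * rho ?l ^ \<tau> * s ?l + ax ?l * mu ?l t * (\<Sum>\<sigma><\<tau>. rho ?l ^ (\<tau> - 1 - \<sigma>) * (\<Sum>m\<in>{1..l'}. T' m (Suc \<sigma>)))"
    using IH rho0 ax0 mu0
    by (intro add_left_mono mult_left_mono sum_mono mult_nonneg_nonneg) (auto simp: zero_le_power)
  also have "ax ?l * mu ?l t * (\<Sum>\<sigma><\<tau>. rho ?l ^ (\<tau> - 1 - \<sigma>) * (\<Sum>m\<in>{1..l'}. T' m (Suc \<sigma>)))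
     = (\<Sum>m\<in>{1..l'}. ax ?l * mu ?l t * (\<Sum>\<sigma><\<tau>. rho ?l ^ (\<tau> - 1 - \<sigma>) * T' m (Suc \<sigma>)))"
    by (simp add: sum_distrib_left sum_distrib_right mult_ac) (rule sum.swap)
  also have "\<dots> \<le> (\<Sum>m\<in>{1..l'}. (\<Prod>i\<in>{m..?l}. mu i t) * real ((\<tau> + (?l - m)) choose (?l - m))
       * (MAX i\<in>{m..?l}. rho i ^ \<tau>) * (\<Prod>i\<in>{m+1..?l}. ax i) * s m)"
  proof (rule sum_mono)
    fix m assume m: "m \<in> {1..l'}"
    define n where "n = l' - m"
    have ln: "?l - m = Suc n" using m n_def by auto
    define R where "R = (MAX i\<in>{m..?l}. rho i)"
    have R0: "0 \<le> R" unfolding R_def using m rho0 by (auto simp: Max_ge_iff intro: exI[of _ m])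
    have Rl: "rho ?l \<le> R" unfolding R_def using m by (intro Max_ge) auto
    have Rm: "(MAX i\<in>{m..l'}. rho i ^ e) \<le> R ^ e" for e
    proof -
      have "rho i \<le> R" if "i \<in> {m..l'}" for i unfolding R_def using that by (intro Max_ge) auto
      then show ?thesis using m by (subst Max_le_iff) (auto intro: power_mono rho0)
    qed
    have M0: "0 \<le> (MAX i\<in>{m..l'}. rho i ^ e)" for e
      using m by (intro order_trans[OF zero_le_power[OF rho0[of m]] Max_ge]) auto
    define K where "K = ax ?l * mu ?l t * (\<Prod>i\<in>{m..l'}. mu i t) * (\<Prod>i\<in>{m+1..l'}. ax i) * s m"
    have K0: "0 \<le> K" unfolding K_def using ax0 mu0 s0 by (intro mult_nonneg_nonneg prod_nonneg) auto
    have "ax ?l * mu ?l t * (\<Sum>\<sigma><\<tau>. rho ?l ^ (\<tau> - 1 - \<sigma>) * T' m (Suc \<sigma>))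
        = K * (\<Sum>\<sigma><\<tau>. rho ?l ^ (\<tau> - 1 - \<sigma>) * real ((Suc \<sigma> + n) choose n) * (MAX i\<in>{m..l'}. rho i ^ Suc \<sigma>))"
      unfolding K_def T'_def n_def by (simp add: sum_distrib_left mult_ac)
    also have "\<dots> \<le> K * (\<Sum>\<sigma><\<tau>. real ((Suc \<sigma> + n) choose n) * R ^ \<tau>)"
    proof (intro mult_left_mono[OF _ K0] sum_mono)
      fix \<sigma> assume "\<sigma> \<in> {..<\<tau>}"
      then have e: "\<tau> - 1 - \<sigma> + Suc \<sigma> = \<tau>" by auto
      have "rho ?l ^ (\<tau> - 1 - \<sigma>) * (MAX i\<in>{m..l'}. rho i ^ Suc \<sigma>) \<le> R ^ (\<tau> - 1 - \<sigma>) * R ^ Suc \<sigma>"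
        using Rl Rm[of "Suc \<sigma>"] rho0 R0 M0[of "Suc \<sigma>"] by (intro mult_mono power_mono) (auto simp: zero_le_power)
      also have "\<dots> = R ^ \<tau>" by (simp only: power_add[symmetric] e)
      finally have "rho ?l ^ (\<tau> - 1 - \<sigma>) * (MAX i\<in>{m..l'}. rho i ^ Suc \<sigma>) \<le> R ^ \<tau>" .
      then show "rho ?l ^ (\<tau> - 1 - \<sigma>) * real ((Suc \<sigma> + n) choose n) * (MAX i\<in>{m..l'}. rho i ^ Suc \<sigma>)
                 \<le> real ((Suc \<sigma> + n) choose n) * R ^ \<tau>"
        by (simp add: mult_left_mono mult_ac)
    qed
    also have "\<dots> = K * ((\<Sum>\<sigma><\<tau>. real ((Suc \<sigma> + n) choose n)) * R ^ \<tau>)"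
      by (simp add: sum_distrib_right)
    also have "\<dots> \<le> K * (real ((\<tau> + Suc n) choose Suc n) * R ^ \<tau>)"
      by (rule mult_left_mono[OF mult_right_mono[OF hockey[where \<tau>=\<tau> and n=n] zero_le_power[OF R0]] K0])
    also have "\<dots> = (\<Prod>i\<in>{m..?l}. mu i t) * real ((\<tau> + (?l - m)) choose (?l - m))
       * (MAX i\<in>{m..?l}. rho i ^ \<tau>) * (\<Prod>i\<in>{m+1..?l}. ax i) * s m"
    proof -
      have p1: "(\<Prod>i\<in>{m..?l}. mu i t) = (\<Prod>i\<in>{m..l'}. mu i t) * mu ?l t"
        using m by (simp add: prod.cl_ivl_Suc)
      have p2: "(\<Prod>i\<in>{m+1..?l}. ax i) = (\<Prod>i\<in>{m+1..l'}. ax i) * ax ?l"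
        using m by (simp add: prod.cl_ivl_Suc)
      have p3: "(MAX i\<in>{m..?l}. rho i ^ \<tau>) = R ^ \<tau>"
        unfolding R_def using m by (intro max_pow_le rho0) auto
      show ?thesis unfolding p1 p2 p3 ln K_def by (simp add: mult_ac)
    qed
    finally show "ax ?l * mu ?l t * (\<Sum>\<sigma><\<tau>. rho ?l ^ (\<tau> - 1 - \<sigma>) * T' m (Suc \<sigma>))
        \<le> (\<Prod>i\<in>{m..?l}. mu i t) * real ((\<tau> + (?l - m)) choose (?l - m))
       * (MAX i\<in>{m..?l}. rho i ^ \<tau>) * (\<Prod>i\<in>{m+1..?l}. ax i) * s m" .
  qed
  also have "mu ?l t * rho ?l ^ \<tau> * s ?l + (\<Sum>m\<in>{1..l'}. (\<Prod>i\<in>{m..?l}. mu i t) * real ((\<tau> + (?l - m)) choose (?l - m))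
       * (MAX i\<in>{m..?l}. rho i ^ \<tau>) * (\<Prod>i\<in>{m+1..?l}. ax i) * s m) = Hb rho mu ax s ?l t \<tau>"
    unfolding Hb_def using Suc.hyps by (simp add: sum.cl_ivl_Suc)
  finally show "F ?l \<tau> \<le> Hb rho mu ax s ?l t \<tau>" by simp
  qed
qed

lemma Hb_eq_beta:
  assumes "1 \<le> L"
  shows "Hb rho mu ax s L t t = beta_tilde L rho mu ax s t"
proof -
  have split: "{1..L} = insert L {1..<L}" using assms by auto
  have c: "real ((t + (L - m)) choose (L - m)) = fact (t + L - m) / (fact t * fact (L - m))" if "m \<in> {1..<L}" for m
  proof -
    have e: "t + (L - m) = t + L - m" using that by auto
    have "real ((t + (L - m)) choose (L - m)) = fact (t + (L - m)) / (fact (L - m) * fact (t + (L - m) - (L - m)))"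
      by (rule binomial_fact) simp
    then have "real ((t + (L - m)) choose (L - m)) = fact (t + (L - m)) / (fact t * fact (L - m))"
      by (simp add: mult.commute)
    then show ?thesis by (simp only: e)
  qed
  have nin: "L \<notin> {1..<L}" by simp
  have "Hb rho mu ax s L t t = (\<Prod>i\<in>{L..L}. mu i t) * real ((t + (L - L)) choose (L - L))
       * (MAX i\<in>{L..L}. rho i ^ t) * (\<Prod>i\<in>{L+1..L}. ax i) * s L
     + (\<Sum>m\<in>{1..<L}. (\<Prod>i\<in>{m..L}. mu i t) * real ((t + (L - m)) choose (L - m))
       * (MAX i\<in>{m..L}. rho i ^ t) * (\<Prod>i\<in>{m+1..L}. ax i) * s m)"
    unfolding Hb_def split by (rule sum.insert[OF finite_atLeastLessThan nin])
  also have "(\<Sum>m\<in>{1..<L}. (\<Prod>i\<in>{m..L}. mu i t) * real ((t + (L - m)) choose (L - m))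
       * (MAX i\<in>{m..L}. rho i ^ t) * (\<Prod>i\<in>{m+1..L}. ax i) * s m)
     = (\<Sum>m\<in>{1..<L}. (\<Prod>i\<in>{m..L}. mu i t) * (fact (t + L - m) / (fact t * fact (L - m)))
       * (MAX i\<in>{m..L}. rho i ^ t) * (\<Prod>i\<in>{m+1..L}. ax i) * s m)"
    by (rule sum.cong[OF refl]) (simp only: c)
  finally show ?thesis unfolding beta_tilde_def by simp
qed


(* ---- part H1a ---- *)


definition Evec :: "(real^'c) \<times> (real^'c) \<Rightarrow> (real^'c) \<times> (real^'c) \<Rightarrow> real^2" where
  "Evec s s' = vector [norm (fst s - fst s'), norm (snd s - snd s')]"

lemma Evec_nonneg: "0 \<le> Evec s s'"
  by (simp add: Evec_def less_eq_vec_def forall_2)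

lemma alpha_s_nonneg: "0 \<le> alpha_s P xm k"
  unfolding alpha_s_def
  by (intro add_nonneg_nonneg mult_nonneg_nonneg) (simp_all add: opnorm_nonneg cbar_nonneg less_imp_le[OF sig_i_pos] phi_c_nonneg)

lemma alpha_x_nonneg: "0 \<le> alpha_x P xm k"
  unfolding alpha_x_def
  by (intro add_nonneg_nonneg mult_nonneg_nonneg) (simp_all add: opnorm_nonneg cbar_nonneg less_imp_le[OF sig_i_pos] phi_c_nonneg)

lemma A_s_comp:
  "A_s P xm k $ 1 $ 1 = sig_f P xm k" "A_s P xm k $ 1 $ 2 = alpha_s P xm k"
  "A_s P xm k $ 2 $ 1 = sig_o P xm k * sig_f P xm k"
  "A_s P xm k $ 2 $ 2 = alpha_s P xm k * sig_o P xm k + 1/4 * tanh (cbar P xm k) * opnorm (Uo P)"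
  by (simp_all add: A_s_def)

lemma A_s_nonneg: "0 \<le> A_s P xm k $ i $ j"
proof -
  have "0 \<le> tanh (cbar P xm k)" using cbar_nonneg by simp
  then show ?thesis
    using sig_f_pos[of P xm k] sig_o_pos[of P xm k] alpha_s_nonneg[of P xm k] opnorm_nonneg[of "Uo P"]
    using exhaust_2[of i] exhaust_2[of j] by (auto simp: A_s_comp)
qed

lemma A_s_trace: "0 < A_s P xm k $ 1 $ 1 + A_s P xm k $ 2 $ 2"
proof -
  have "0 \<le> A_s P xm k $ 2 $ 2" by (rule A_s_nonneg)
  then show ?thesis using sig_f_pos[of P xm k] by (simp add: A_s_comp)
qed


(* ---- part H1b ---- *)


lemma cell_step:
  fixes P :: "('i::finite, 'c::finite) lstm_layer"
  assumes xm: "0 \<le> xm" and x: "\<And>j. \<bar>x $ j\<bar> \<le> xm" and x': "\<And>j. \<bar>x' $ j\<bar> \<le> xm"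
    and s: "inS P xm k s" and s': "inS P xm k s'"
  shows "Evec (cell P x s) (cell P x' s') \<le> A_s P xm k *v Evec s s' + norm (x - x') *\<^sub>R a_x P xm k"
proof -
  obtain c h where sch: "s = (c,h)" by fastforce
  obtain c' h' where sch': "s' = (c',h')" by fastforce
  note l = cell_lip[OF xm x x' s[unfolded sch] s'[unfolded sch']]
  let ?E = "Evec s s'"
  have E1: "?E $ 1 = norm (c - c')" and E2: "?E $ 2 = norm (h - h')" by (simp_all add: Evec_def sch sch')
  have mv1: "(A_s P xm k *v ?E) $ 1 = sig_f P xm k * ?E$1 + alpha_s P xm k * ?E$2"
    by (simp add: matrix_vector_mult_def sum_2 A_s_comp)
  have mv2: "(A_s P xm k *v ?E) $ 2 = sig_o P xm k * sig_f P xm k * ?E$1 + (alpha_s P xm k * sig_o P xm k + 1/4 * tanh (cbar P xm k) * opnorm (Uo P)) * ?E$2"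
    by (simp add: matrix_vector_mult_def sum_2 A_s_comp)
  have ax1: "(norm (x - x') *\<^sub>R a_x P xm k) $ 1 = norm (x - x') * alpha_x P xm k" by (simp add: a_x_def)
  have ax2: "(norm (x - x') *\<^sub>R a_x P xm k) $ 2 = norm (x - x') * (alpha_x P xm k * sig_o P xm k + 1/4 * tanh (cbar P xm k) * opnorm (Wo P))"
    by (simp add: a_x_def)
  have L1: "Evec (cell P x s) (cell P x' s') $ 1 = norm (fst (cell P x (c,h)) - fst (cell P x' (c',h')))"
    and L2: "Evec (cell P x s) (cell P x' s') $ 2 = norm (snd (cell P x (c,h)) - snd (cell P x' (c',h')))"
    by (simp_all add: Evec_def sch sch')
  have g1: "Evec (cell P x s) (cell P x' s') $ 1 \<le> (A_s P xm k *v ?E + norm (x - x') *\<^sub>R a_x P xm k) $ 1"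
    unfolding vector_add_component mv1 ax1 L1 E1 E2 using l(1) by (simp add: mult.commute)
  have g2: "Evec (cell P x s) (cell P x' s') $ 2 \<le> (A_s P xm k *v ?E + norm (x - x') *\<^sub>R a_x P xm k) $ 2"
  proof -
    have "Evec (cell P x s) (cell P x' s') $ 2 \<le> sig_o P xm k * (sig_f P xm k * norm (c - c') + alpha_s P xm k * norm (h - h') + alpha_x P xm k * norm (x - x'))
             + 1/4 * tanh (cbar P xm k) * (opnorm (Uo P) * norm (h - h') + opnorm (Wo P) * norm (x - x'))"
      unfolding L2 by (rule l(2))
    also have "\<dots> = (A_s P xm k *v ?E + norm (x - x') *\<^sub>R a_x P xm k) $ 2"
      unfolding vector_add_component mv2 ax2 E1 E2 by (simp add: algebra_simps)
    finally show ?thesis .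
  qed
  show ?thesis unfolding less_eq_vec_def forall_2 using g1 g2 by simp
qed

lemma init_bound:
  fixes P :: "('i::finite, 'c::finite) lstm_layer"
  assumes s: "inS P xm k s" and s': "inS P xm k s'"
  shows "norm (Evec s s') \<le> 2 * sqrt (real CARD('c)) * sbar P xm k"
proof -
  let ?cb = "cbar P xm k" and ?hb = "tanh (cbar P xm k) * sig_o P xm k"
  have "\<bar>(fst s - fst s') $ j\<bar> \<le> 2 * ?cb" for j
  proof -
    have "\<bar>fst s $ j\<bar> \<le> ?cb" "\<bar>fst s' $ j\<bar> \<le> ?cb" using s s' unfolding inS_def by auto
    then show ?thesis by simp
  qed
  then have c: "norm (fst s - fst s') \<le> sqrt (real CARD('c)) * (2 * ?cb)" by (rule norm_le_sqrt_card)
  have "\<bar>(snd s - snd s') $ j\<bar> \<le> 2 * ?hb" for j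
  proof -
    have "\<bar>snd s $ j\<bar> \<le> ?hb" "\<bar>snd s' $ j\<bar> \<le> ?hb" using s s' unfolding inS_def by auto
    then show ?thesis by simp
  qed
  then have h: "norm (snd s - snd s') \<le> sqrt (real CARD('c)) * (2 * ?hb)" by (rule norm_le_sqrt_card)
  have "norm (Evec s s') = sqrt ((norm (fst s - fst s'))\<^sup>2 + (norm (snd s - snd s'))\<^sup>2)"
    by (simp add: Evec_def norm_vec2)
  also have "\<dots> \<le> sqrt ((sqrt (real CARD('c)) * (2 * ?cb))\<^sup>2 + (sqrt (real CARD('c)) * (2 * ?hb))\<^sup>2)"
    using c h by (intro real_sqrt_le_mono add_mono power_mono) auto
  also have "(sqrt (real CARD('c)) * (2 * ?cb))\<^sup>2 + (sqrt (real CARD('c)) * (2 * ?hb))\<^sup>2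
      = (2 * sqrt (real CARD('c)))\<^sup>2 * (?cb\<^sup>2 + ?hb\<^sup>2)"
    by (simp add: power_mult_distrib algebra_simps)
  also have "sqrt \<dots> = 2 * sqrt (real CARD('c)) * sqrt (?cb\<^sup>2 + ?hb\<^sup>2)"
    by (simp add: real_sqrt_mult)
  also have "sqrt (?cb\<^sup>2 + ?hb\<^sup>2) = sbar P xm k" by (simp add: sbar_def norm_vec2)
  finally show ?thesis .
qed

lemma beta_tilde_cong:
  assumes L1: "1 \<le> L" and rr: "\<And>l. 1 \<le> l \<Longrightarrow> l \<le> L \<Longrightarrow> rho l = rho' l"
  shows "beta_tilde L rho mu ax s t = beta_tilde L rho' mu ax s t"
proof -
  have m: "(MAX i\<in>{l..L}. rho i ^ t) = (MAX i\<in>{l..L}. rho' i ^ t)" if "l \<in> {1..<L}" for l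
    using that rr by (intro arg_cong[where f=Max] image_cong) auto
  show ?thesis unfolding beta_tilde_def
    using rr[of L] L1 m by (auto intro!: sum.cong)
qed


(* ---- part H2 ---- *)


lemma traj_Suc1: "traj P1 Ps x s0 (Suc t) 1 = cell P1 (x t) (traj P1 Ps x s0 t 1)"
  by (simp add: One_nat_def)

lemma traj_SucSuc: "traj P1 Ps x s0 (Suc t) (Suc (Suc m)) =
   cell (Ps (Suc (Suc m))) (snd (traj P1 Ps x s0 (Suc t) (Suc m))) (traj P1 Ps x s0 t (Suc (Suc m)))"
  by simp

lemma traj_inv:
  fixes P1 :: "('x::finite, 'c::finite) lstm_layer" and Ps :: "nat \<Rightarrow> ('c, 'c) lstm_layer"
    and x :: "nat \<Rightarrow> real^'x"
  assumes xm: "0 \<le> xmax" and xb: "\<forall>t j. \<bar>x t $ j\<bar> \<le> xmax" and s0: "s0 \<in> init_set P1 Ps xmax k L"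
  shows "(1 \<le> L \<longrightarrow> inS P1 xmax k (traj P1 Ps x s0 t 1)) \<and>
         (\<forall>m. Suc (Suc m) \<le> L \<longrightarrow> inS (Ps (Suc (Suc m))) 1 k (traj P1 Ps x s0 t (Suc (Suc m))))"
proof (induction t)
  case 0
  have i: "infnorm (fst (s0 l)) \<le> cbarL P1 Ps xmax k l \<and>
      infnorm (snd (s0 l)) \<le> tanh (cbarL P1 Ps xmax k l) * sig_oL P1 Ps xmax k l" if "1 \<le> l" "l \<le> L" for l
    using s0 that unfolding init_set_def by auto
  show ?case
  proof (intro conjI impI allI)
    assume "1 \<le> L"
    then show "inS P1 xmax k (traj P1 Ps x s0 0 1)"
      using i[of 1] by (simp add: inS_def infnorm_le_iff_cart cbarL_def sig_oL_def)
  next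
    fix m assume "Suc (Suc m) \<le> L"
    then show "inS (Ps (Suc (Suc m))) 1 k (traj P1 Ps x s0 0 (Suc (Suc m)))"
      using i[of "Suc (Suc m)"] by (simp add: inS_def infnorm_le_iff_cart cbarL_def sig_oL_def)
  qed
next
  case (Suc t)
  have xb': "\<And>j. \<bar>x t $ j\<bar> \<le> xmax" using xb by auto
  have l1: "1 \<le> L \<Longrightarrow> inS P1 xmax k (traj P1 Ps x s0 (Suc t) 1)"
    unfolding traj_Suc1 using Suc xm xb' by (intro cell_inv) auto
  have hb1: "\<And>j. \<bar>snd (traj P1 Ps x s0 (Suc t) 1) $ j\<bar> \<le> 1" if "1 \<le> L"
    using l1[OF that] hbar_le1[of P1 xmax k] unfolding inS_def by (meson order_trans)
  have IHt: "\<And>m. Suc (Suc m) \<le> L \<Longrightarrow> inS (Ps (Suc (Suc m))) 1 k (traj P1 Ps x s0 t (Suc (Suc m)))"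
    using Suc.IH by blast
  have ll: "Suc (Suc m) \<le> L \<longrightarrow> inS (Ps (Suc (Suc m))) 1 k (traj P1 Ps x s0 (Suc t) (Suc (Suc m)))" for m
  proof (induction m)
    case 0
    show ?case
    proof
      assume L2: "Suc (Suc 0) \<le> L"
      have inp: "\<And>j. \<bar>snd (traj P1 Ps x s0 (Suc t) (Suc 0)) $ j\<bar> \<le> 1" using hb1 L2 by simp
      show "inS (Ps (Suc (Suc 0))) 1 k (traj P1 Ps x s0 (Suc t) (Suc (Suc 0)))"
        unfolding traj_SucSuc using IHt[of 0] L2 inp by (intro cell_inv) auto
    qed
  next
    case (Suc m)
    show ?case
    proof
      assume L2: "Suc (Suc (Suc m)) \<le> L"
      have "inS (Ps (Suc (Suc m))) 1 k (traj P1 Ps x s0 (Suc t) (Suc (Suc m)))" using Suc.IH L2 by simp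
      then have inp: "\<And>j. \<bar>snd (traj P1 Ps x s0 (Suc t) (Suc (Suc m))) $ j\<bar> \<le> 1"
        using hbar_le1[of "Ps (Suc (Suc m))" 1 k] unfolding inS_def by (meson order_trans)
      show "inS (Ps (Suc (Suc (Suc m)))) 1 k (traj P1 Ps x s0 (Suc t) (Suc (Suc (Suc m))))"
        unfolding traj_SucSuc using IHt[of "Suc m"] L2 inp
        by (intro cell_inv) auto
    qed
  qed
  show ?case using l1 ll by blast
qed


(* ---- part H3 ---- *)


lemma A_sL_nonneg: "0 \<le> A_sL P1 Ps xmax k l $ i $ j"
  by (simp add: A_sL_def A_s_nonneg)

lemma A_sL_trace: "0 < A_sL P1 Ps xmax k l $ 1 $ 1 + A_sL P1 Ps xmax k l $ 2 $ 2"
  by (simp add: A_sL_def A_s_trace)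

lemma traj_E_bound:
  fixes P1 :: "('x::finite, 'c::finite) lstm_layer" and Ps :: "nat \<Rightarrow> ('c, 'c) lstm_layer"
    and x xh :: "nat \<Rightarrow> real^'x"
    and U :: "nat \<Rightarrow> complex^2^2" and lam1 lam2 :: "nat \<Rightarrow> real" and nu :: "nat \<Rightarrow> complex"
  assumes L1: "L \<ge> 1" and xm: "xmax > 0"
    and sch: "\<forall>l\<in>{1..L}. schur2 (A_sL P1 Ps xmax k l) (U l) (lam1 l) (nu l) (lam2 l)"
    and xb: "\<forall>t j. \<bar>x t $ j\<bar> \<le> xmax" and xhb: "\<forall>t j. \<bar>xh t $ j\<bar> \<le> xmax"
    and eq: "\<forall>t\<ge>t0. x t = xh t"
    and s0: "s0 \<in> init_set P1 Ps xmax k L"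
  shows "norm (Evec (traj P1 Ps x s0 (t0 + \<tau>) L) (traj P1 Ps xh s0 (t0 + \<tau>) L))
    \<le> beta_tilde L (\<lambda>l. spec_rad (cmat (A_sL P1 Ps xmax k l)))
                (\<lambda>l t. mu_fn (lam1 l) (nu l) (lam2 l) t)
                (\<lambda>l. norm (a_xL P1 Ps xmax k l))
                (\<lambda>l. 2 * sqrt (real CARD('c)) * sbarL P1 Ps xmax k l) \<tau>"
proof -
  define E where "E l \<tau> = Evec (traj P1 Ps x s0 (t0+\<tau>) l) (traj P1 Ps xh s0 (t0+\<tau>) l)" for l \<tau>
  define F where "F l \<tau> = norm (E l \<tau>)" for l \<tau>
  define rho where "rho l = spec_rad (cmat (A_sL P1 Ps xmax k l))" for l
  define rho' where "rho' l = (if 1 \<le> l \<and> l \<le> L then rho l else 0)" for l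
  define mu where "mu l t = mu_fn (lam1 l) (nu l) (lam2 l) t" for l t
  define ax where "ax l = norm (a_xL P1 Ps xmax k l)" for l
  define sv where "sv l = 2 * sqrt (real CARD('c)) * sbarL P1 Ps xmax k l" for l
  have xm0: "0 \<le> xmax" using xm by simp
  note invx = traj_inv[OF xm0 xb s0] and invh = traj_inv[OF xm0 xhb s0]
  have lam: "0 < lam1 l" "\<bar>lam2 l\<bar> \<le> lam1 l" "lam1 l \<le> rho l" if "1 \<le> l" "l \<le> L" for l
  proof -
    have s: "schur2 (A_sL P1 Ps xmax k l) (U l) (lam1 l) (nu l) (lam2 l)" using sch that by auto
    show "0 < lam1 l" "\<bar>lam2 l\<bar> \<le> lam1 l" using schur_lam[OF s A_sL_trace] by auto
    show "lam1 l \<le> rho l" using spec_rad_ge[OF s] unfolding rho_def by simp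
  qed
  have s_l: "schur2 (A_sL P1 Ps xmax k l) (U l) (lam1 l) (nu l) (lam2 l)" if "1 \<le> l" "l \<le> L" for l
    using sch that by auto
  have tS: "t0 + Suc \<sigma> = Suc (t0 + \<sigma>)" for \<sigma> by simp
  have xeq: "norm (x (t0 + \<sigma>) - xh (t0 + \<sigma>)) = 0" for \<sigma> using eq by simp
  have xb1: "\<And>j. \<bar>x (t0 + \<sigma>) $ j\<bar> \<le> xmax" "\<And>j. \<bar>xh (t0 + \<sigma>) $ j\<bar> \<le> xmax" for \<sigma>
    using xb xhb by auto
  have step1: "E 1 (Suc \<sigma>) \<le> A_sL P1 Ps xmax k 1 *v E 1 \<sigma> + 0 *\<^sub>R a_xL P1 Ps xmax k 1" for \<sigma>
  proof -
    have "E 1 (Suc \<sigma>) \<le> A_s P1 xmax k *v E 1 \<sigma> + norm (x (t0 + \<sigma>) - xh (t0 + \<sigma>)) *\<^sub>R a_x P1 xmax k"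
      unfolding E_def tS traj_Suc1
      by (rule cell_step[OF xm0 xb1 invx[THEN conjunct1, rule_format, OF L1] invh[THEN conjunct1, rule_format, OF L1]])
    then show ?thesis by (simp add: xeq A_sL_def a_xL_def)
  qed
  have stepm: "E (Suc (Suc m)) (Suc \<sigma>) \<le> A_sL P1 Ps xmax k (Suc (Suc m)) *v E (Suc (Suc m)) \<sigma>
      + norm (snd (traj P1 Ps x s0 (t0 + Suc \<sigma>) (Suc m)) - snd (traj P1 Ps xh s0 (t0 + Suc \<sigma>) (Suc m))) *\<^sub>R a_xL P1 Ps xmax k (Suc (Suc m))"
    if mL: "Suc (Suc m) \<le> L" for m \<sigma>
  proof -
    have hb: "\<bar>snd (traj P1 Ps y s0 t (Suc m)) $ j\<bar> \<le> 1" if yb: "\<forall>t j. \<bar>y t $ j\<bar> \<le> xmax" for y t j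
    proof (cases m)
      case 0
      have "inS P1 xmax k (traj P1 Ps y s0 t 1)" using traj_inv[OF xm0 yb s0] L1 by blast
      then have "\<bar>snd (traj P1 Ps y s0 t 1) $ j\<bar> \<le> 1"
        using hbar_le1[of P1 xmax k] unfolding inS_def by (meson order_trans)
      then show ?thesis using 0 by simp
    next
      case (Suc m')
      have "inS (Ps (Suc (Suc m'))) 1 k (traj P1 Ps y s0 t (Suc (Suc m')))"
        using traj_inv[OF xm0 yb s0] mL Suc by auto
      then show ?thesis using hbar_le1[of "Ps (Suc (Suc m'))" 1 k] Suc unfolding inS_def by (meson order_trans)
    qed
    have "E (Suc (Suc m)) (Suc \<sigma>) \<le> A_s (Ps (Suc (Suc m))) 1 k *v E (Suc (Suc m)) \<sigma>
      + norm (snd (traj P1 Ps x s0 (t0 + Suc \<sigma>) (Suc m)) - snd (traj P1 Ps xh s0 (t0 + Suc \<sigma>) (Suc m))) *\<^sub>R a_x (Ps (Suc (Suc m))) 1 k"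
      unfolding E_def tS traj_SucSuc
      by (rule cell_step[OF zero_le_one hb[OF xb] hb[OF xhb]
            invx[THEN conjunct2, rule_format, OF mL] invh[THEN conjunct2, rule_format, OF mL]])
    then show ?thesis by (simp add: A_sL_def a_xL_def)
  qed
  have E0: "\<And>l \<tau>. 0 \<le> E l \<tau>" unfolding E_def by (rule Evec_nonneg)
  have init: "F l 0 \<le> sv l" if "1 \<le> l" "l \<le> L" for l
  proof (cases "l = 1")
    case True
    show ?thesis unfolding F_def E_def sv_def True
      using init_bound[OF invx[THEN conjunct1, rule_format, OF L1] invh[THEN conjunct1, rule_format, OF L1]]
      by (simp add: sbarL_def)
  next
    case False
    define m where "m = l - 2"
    have m: "l = Suc (Suc m)" unfolding m_def using that False by arith
    have mL: "Suc (Suc m) \<le> L" using that m by simp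
    show ?thesis unfolding F_def E_def sv_def m
      using init_bound[OF invx[THEN conjunct2, rule_format, OF mL] invh[THEN conjunct2, rule_format, OF mL]]
      by (simp add: sbarL_def)
  qed
  have base: "F 1 \<tau> \<le> mu 1 t * rho' 1 ^ \<tau> * sv 1" if "\<tau> \<le> t" for t \<tau>
  proof -
    have "F 1 \<tau> \<le> mu_fn (lam1 1) (nu 1) (lam2 1) t * rho 1 ^ \<tau> * norm (E 1 0)
           + norm (a_xL P1 Ps xmax k 1) * mu_fn (lam1 1) (nu 1) (lam2 1) t * (\<Sum>\<sigma><\<tau>. rho 1 ^ (\<tau> - 1 - \<sigma>) * 0)"
      unfolding F_def
      by (rule layer_bound[where E="E 1" and d="\<lambda>_. 0", OF s_l[OF order_refl L1] lam(1,2,3)[OF order_refl L1]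
             A_sL_nonneg E0 order_refl step1 that])
    also have "\<dots> \<le> mu 1 t * rho' 1 ^ \<tau> * sv 1"
      using init[OF order_refl L1] lam(1,3)[OF order_refl L1] L1
      by (simp add: mu_def rho'_def F_def mult_left_mono mu_fn_nonneg)
    finally show ?thesis .
  qed
  have step: "F l \<tau> \<le> mu l t * rho' l ^ \<tau> * sv l + ax l * mu l t * (\<Sum>\<sigma><\<tau>. rho' l ^ (\<tau> - 1 - \<sigma>) * F (l - 1) (Suc \<sigma>))"
    if l2: "2 \<le> l" and lL: "l \<le> L" and tt: "\<tau> \<le> t" for l t \<tau>
  proof -
    define m where "m = l - 2"
    have m: "l = Suc (Suc m)" unfolding m_def using l2 by arith
    have mL: "Suc (Suc m) \<le> L" using lL m by simp
    have l1': "1 \<le> l" using l2 by simp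
    define d where "d \<sigma> = norm (snd (traj P1 Ps x s0 (t0 + Suc \<sigma>) (Suc m)) - snd (traj P1 Ps xh s0 (t0 + Suc \<sigma>) (Suc m)))" for \<sigma>
    have d0: "\<And>\<sigma>. 0 \<le> d \<sigma>" unfolding d_def by simp
    have dF: "d \<sigma> \<le> F (l - 1) (Suc \<sigma>)" for \<sigma>
    proof -
      have "d \<sigma> = E (Suc m) (Suc \<sigma>) $ 2" unfolding d_def E_def by (simp add: Evec_def)
      also have "\<dots> \<le> norm (E (Suc m) (Suc \<sigma>))" by (metis component_le_norm_cart abs_ge_self order_trans)
      finally show ?thesis unfolding F_def m by simp
    qed
    have "F l \<tau> \<le> mu_fn (lam1 l) (nu l) (lam2 l) t * rho l ^ \<tau> * norm (E l 0)
           + norm (a_xL P1 Ps xmax k l) * mu_fn (lam1 l) (nu l) (lam2 l) t * (\<Sum>\<sigma><\<tau>. rho l ^ (\<tau> - 1 - \<sigma>) * d \<sigma>)"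
      unfolding F_def
      by (rule layer_bound[where E="E l" and d=d, OF s_l[OF l1' lL] lam(1,2,3)[OF l1' lL]
             A_sL_nonneg E0 d0 stepm[OF mL, folded d_def m] tt])
    also have "\<dots> \<le> mu l t * rho' l ^ \<tau> * sv l + ax l * mu l t * (\<Sum>\<sigma><\<tau>. rho' l ^ (\<tau> - 1 - \<sigma>) * F (l - 1) (Suc \<sigma>))"
    proof (intro add_mono)
      have r0: "0 \<le> rho l" using lam(1,3)[OF l1' lL] by simp
      show "mu_fn (lam1 l) (nu l) (lam2 l) t * rho l ^ \<tau> * norm (E l 0) \<le> mu l t * rho' l ^ \<tau> * sv l"
        using init[OF l1' lL] r0 l1' lL
        by (simp add: mu_def rho'_def F_def mult_left_mono mu_fn_nonneg)
      show "norm (a_xL P1 Ps xmax k l) * mu_fn (lam1 l) (nu l) (lam2 l) t * (\<Sum>\<sigma><\<tau>. rho l ^ (\<tau> - 1 - \<sigma>) * d \<sigma>)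
        \<le> ax l * mu l t * (\<Sum>\<sigma><\<tau>. rho' l ^ (\<tau> - 1 - \<sigma>) * F (l - 1) (Suc \<sigma>))"
      proof -
        have "(\<Sum>\<sigma><\<tau>. rho l ^ (\<tau> - 1 - \<sigma>) * d \<sigma>) \<le> (\<Sum>\<sigma><\<tau>. rho' l ^ (\<tau> - 1 - \<sigma>) * F (l - 1) (Suc \<sigma>))"
        proof (rule sum_mono)
          fix \<sigma> assume "\<sigma> \<in> {..<\<tau>}"
          have rr: "rho' l = rho l" using l1' lL by (simp add: rho'_def)
          show "rho l ^ (\<tau> - 1 - \<sigma>) * d \<sigma> \<le> rho' l ^ (\<tau> - 1 - \<sigma>) * F (l - 1) (Suc \<sigma>)"
            unfolding rr by (rule mult_left_mono[OF dF zero_le_power[OF r0]])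
        qed
        then show ?thesis unfolding ax_def mu_def
          by (intro mult_left_mono mult_nonneg_nonneg) (auto simp: mu_fn_nonneg)
      qed
    qed
    finally show ?thesis .
  qed
  have rho0: "0 \<le> rho' l" for l 
  proof (cases "1 \<le> l \<and> l \<le> L")
    case True
    then have "0 < lam1 l" "lam1 l \<le> rho l" using lam(1,3)[of l] by auto
    then show ?thesis using True unfolding rho'_def by simp
  next
    case False then show ?thesis unfolding rho'_def by auto
  qed
  have mu0: "0 \<le> mu l t" for l t unfolding mu_def by (rule mu_fn_nonneg)
  have ax0: "0 \<le> ax l" for l unfolding ax_def by simp
  have sv0: "0 \<le> sv l" for l unfolding sv_def sbarL_def sbar_def by simp
  have "\<forall>\<tau>'\<le>\<tau>. F L \<tau>' \<le> Hb rho' mu ax sv L \<tau> \<tau>'"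
    by (rule multi_layer_H[where F=F and rho=rho' and mu=mu and ax=ax and s=sv and L=L,
          OF rho0 mu0 ax0 sv0 base step L1 order_refl])
  then have "F L \<tau> \<le> Hb rho' mu ax sv L \<tau> \<tau>" by simp
  also have "\<dots> = beta_tilde L rho' mu ax sv \<tau>" by (rule Hb_eq_beta[OF L1])
  also have "\<dots> = beta_tilde L rho mu ax sv \<tau>" by (rule beta_tilde_cong[OF L1]) (simp add: rho'_def)
  finally show ?thesis unfolding F_def E_def rho_def mu_def ax_def sv_def .
qed


(* ---- part H4 ---- *)


theorem theorem5p3:
  fixes P1 :: "('x::finite, 'c::finite) lstm_layer"
    and Ps :: "nat \<Rightarrow> ('c, 'c) lstm_layer"
    and Uy :: "real^'c^'y::finite" and b_y :: "real^'y"
    and L k t0 :: nat and xmax e :: real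
    and x xh :: "nat \<Rightarrow> real^'x"
    and U :: "nat \<Rightarrow> complex^2^2" and lam1 lam2 :: "nat \<Rightarrow> real" and nu :: "nat \<Rightarrow> complex"
  assumes "L \<ge> 1" and "xmax > 0"
    and "\<forall>l\<in>{1..L}. spec_rad (cmat (A_sL P1 Ps xmax k l)) < 1"
    and "\<forall>l\<in>{1..L}. schur2 (A_sL P1 Ps xmax k l) (U l) (lam1 l) (nu l) (lam2 l)"
    and "\<forall>t j. \<bar>x t $ j\<bar> \<le> xmax" and "\<forall>t j. \<bar>xh t $ j\<bar> \<le> xmax"
    and "e > 0"
    and "\<forall>t\<ge>t0. x t = xh t"
  shows "(SUP s0\<in>init_set P1 Ps xmax k L. recovery_time P1 Ps Uy b_y L x xh s0 t0 e)
         \<le> least_enat {t. \<forall>t'\<ge>t.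
              beta_tilde L (\<lambda>l. spec_rad (cmat (A_sL P1 Ps xmax k l)))
                (\<lambda>l t. mu_fn (lam1 l) (nu l) (lam2 l) t)
                (\<lambda>l. norm (a_xL P1 Ps xmax k l))
                (\<lambda>l. 2 * sqrt (real CARD('c)) * sbarL P1 Ps xmax k l) t'
              \<le> e / opnorm Uy}"
proof -
  note as = assms
  define bt where "bt = beta_tilde L (\<lambda>l. spec_rad (cmat (A_sL P1 Ps xmax k l)))
                (\<lambda>l t. mu_fn (lam1 l) (nu l) (lam2 l) t)
                (\<lambda>l. norm (a_xL P1 Ps xmax k l))
                (\<lambda>l. 2 * sqrt (real CARD('c)) * sbarL P1 Ps xmax k l)"
  define R where "R = {t. \<forall>t'\<ge>t. bt t' \<le> e / opnorm Uy}"
  show ?thesis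
  proof (cases "R = {}")
    case True
    then show ?thesis unfolding bt_def R_def least_enat_def by simp
  next
    case False
    define T where "T = (LEAST t. t \<in> R)"
    have TR: "T \<in> R" unfolding T_def using False by (auto intro: LeastI)
    have le: "recovery_time P1 Ps Uy b_y L x xh s0 t0 e \<le> enat T" if s0: "s0 \<in> init_set P1 Ps xmax k L" for s0
    proof -
      define R' where "R' = {t. t \<ge> t0 \<and> (\<forall>t'\<ge>t. norm (lstm_out P1 Ps Uy b_y L x s0 t' - lstm_out P1 Ps Uy b_y L xh s0 t') \<le> e)}"
      have mem: "t0 + T \<in> R'"
      proof -
        have "norm (lstm_out P1 Ps Uy b_y L x s0 t' - lstm_out P1 Ps Uy b_y L xh s0 t') \<le> e" if t': "t' \<ge> t0 + T" for t'
        proof -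
          define \<tau> where "\<tau> = t' - t0"
          have t'e: "t' = t0 + \<tau>" unfolding \<tau>_def using t' by simp
          have bnd: "norm (Evec (traj P1 Ps x s0 (t0 + \<tau>) L) (traj P1 Ps xh s0 (t0 + \<tau>) L)) \<le> bt \<tau>"
            unfolding bt_def by (rule traj_E_bound[OF as(1,2,4,5,6,8) s0])
          have bte: "bt \<tau> \<le> e / opnorm Uy" using TR t' unfolding R_def \<tau>_def by auto
          have "lstm_out P1 Ps Uy b_y L x s0 t' - lstm_out P1 Ps Uy b_y L xh s0 t'
              = Uy *v (snd (traj P1 Ps x s0 t' L) - snd (traj P1 Ps xh s0 t' L))"
            by (simp add: lstm_out_def matrix_vector_mult_diff_distrib)
          then have "norm (lstm_out P1 Ps Uy b_y L x s0 t' - lstm_out P1 Ps Uy b_y L xh s0 t')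
              \<le> opnorm Uy * norm (snd (traj P1 Ps x s0 t' L) - snd (traj P1 Ps xh s0 t' L))"
            by (simp add: norm_mv_le)
          also have "norm (snd (traj P1 Ps x s0 t' L) - snd (traj P1 Ps xh s0 t' L))
              \<le> norm (Evec (traj P1 Ps x s0 (t0 + \<tau>) L) (traj P1 Ps xh s0 (t0 + \<tau>) L))"
          proof -
            have "norm (snd (traj P1 Ps x s0 t' L) - snd (traj P1 Ps xh s0 t' L))
                = Evec (traj P1 Ps x s0 (t0 + \<tau>) L) (traj P1 Ps xh s0 (t0 + \<tau>) L) $ 2"
              by (simp add: Evec_def t'e)
            also have "\<dots> \<le> norm (Evec (traj P1 Ps x s0 (t0 + \<tau>) L) (traj P1 Ps xh s0 (t0 + \<tau>) L))"
              by (metis component_le_norm_cart abs_ge_self order_trans)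
            finally show ?thesis .
          qed
          then have "opnorm Uy * norm (snd (traj P1 Ps x s0 t' L) - snd (traj P1 Ps xh s0 t' L))
              \<le> opnorm Uy * bt \<tau>"
            using bnd opnorm_nonneg[of Uy] by (intro mult_left_mono) auto
          also have "\<dots> \<le> e"
          proof (cases "opnorm Uy = 0")
            case True then show ?thesis using as(7) by simp
          next
            case False
            then have "0 < opnorm Uy" using opnorm_nonneg[of Uy] by simp
            then have "opnorm Uy * bt \<tau> \<le> opnorm Uy * (e / opnorm Uy)" using bte by (intro mult_left_mono) auto
            then show ?thesis using False by simp
          qed
          finally show ?thesis .
        qed
        then show ?thesis unfolding R'_def by auto
      qed
      then have ne: "R' \<noteq> {}" by auto
      have "(LEAST t. t \<in> R') \<le> t0 + T" using mem by (rule Least_le)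
      then have "(LEAST t. t \<in> R') - t0 \<le> T" by simp
      then show ?thesis unfolding recovery_time_def Let_def R'_def[symmetric] using ne by simp
    qed
    have "least_enat R = enat T" unfolding least_enat_def T_def using False by simp
    then show ?thesis unfolding bt_def[symmetric] R_def[symmetric]
      by (auto intro!: SUP_least le)
  qed
qed


end
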